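(* For any realization of a run of Algorithm 4 (described in the context) under the standing assumption, the number of successful iterations performed before termination satisfies \[ |\mathcal{S}|\ \le\ \bar K_{\mathcal S}(\epsilon_g,\epsilon_H):=\Big\lfloor\bar{\mathcal{C}}_{\mathcal S}\max\{\epsilon_H^{-1},\epsilon_g^{-2}\epsilon_H,\epsilon_H^{-3}\}\Big\rfloor+1, \] where \[ \bar{\mathcal{C}}_{\mathcal S}:=\tfrac{8(f_0-f_{\rm low})}{\eta}\max\Big\{\tfrac{1}{\delta_0^2},\ \tfrac{4L_H^2}{9\gamma_1^2(1-\eta)^2},\ 7+2L_H\Big\}. \]
   Context: Let $f:\mathbb{R}^n\to\mathbb{R}$ with gradient $g=\nabla f$ and Hessian $H=\nabla^2f$; $\|\cdot\|$ is the Euclidean norm, $\lambda_{\min}$ the smallest eigenvalue, $\mathbb{S}^n$ the real symmetric $n\times n$ matrices. Write $f_k=f(x_k)$, $g_k=g(x_k)$, $H_k=H(x_k)$, $m_k(x)=f_k+g_k^T(x-x_k)+\tfrac12(x-x_k)^TH_k(x-x_k)$. Exact arithmetic is assumed. Algorithm 2 (truncated CG; inputs nonzero $g$, $H\in\mathbb{S}^n$, $\epsilon>0$, $\delta>0$, $\zeta\in(0,1)$, flag capCG, and $M\ge\|H\|$): $k_{\max}=\min\{n,\tfrac12\sqrt{\kappa}\ln(4\kappa^{3/2}/\zeta)\}$ with $\kappa=(M+2\epsilon)/\epsilon$ if capCG is true, else $k_{\max}=n$. Set $y_0=0,r_0=g,p_0=-g,j=0$. While $j<k_{\max}$: if $p_j^T(H+2\epsilon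 I)p_j\le\epsilon\|p_j\|^2$, return $s=y_j+\sigma p_j$ with $\sigma\ge0$, $\|s\|=\delta$, flag BND-NEG; set $\alpha_j=\|r_j\|^2/(p_j^T(H+2\epsilon I)p_j)$, $y_{j+1}=y_j+\alpha_jp_j$; if $\|y_{j+1}\|\ge\delta$, return $s=y_j+\sigma p_j$ with $\sigma\ge0$, $\|s\|=\delta$, flag BND-NORM; set $r_{j+1}=r_j+\alpha_j(H+2\epsilon I)p_j$; if $\|r_{j+1}\|\le\tfrac\zeta2\min\{\|g\|,\epsilon\|y_{j+1}\|\}$, return $s=y_{j+1}$, flag INT-RES; set $\beta_{j+1}=\|r_{j+1}\|^2/\|r_j\|^2$, $p_{j+1}=-r_{j+1}+\beta_{j+1}p_j$, $j\leftarrow j+1$. On loop exit return $s=y_j$, flag INT-MAX. Algorithm 3 (minimum eigenvalue oracle, MEO; inputs $g$, $H\in\mathbb{S}^n$, $\epsilon>0$, $\delta>0$, $\xi\in(0,1)$, $M\ge\|H\|$): a possibly randomized procedure that either returns $s=\pm\delta v$ with $\|v\|=1$, $v^THv\le-\epsilon/2$, satisfying $g^Ts\le0$, $s^THs\le-\tfrac12\epsilon\|s\|^2$, $\|s\|=\delta$, or returns an indication that $H\succeq-\epsilon I$. Algorithm 4 (inexact trust-region Newton-CG). Inputs: $\epsilon_g,\epsilon_H>0$; $\gamma_1\in(0,1)$, $\gamma_2\ge1$, $\psi\in(1/\gamma_2,1]$; $x_0$; $\delta_0>0$; $\delta_{\max}\ge\delta_0$; $\eta\in(0,1)$; $\zeta\in(0,1)$;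 $\xi\in[0,1)$; capCG; $M\ge L_g$. For $k=0,1,\dots$: evaluate $g_k,H_k$. If $g_k\ne0$, call Algorithm 2 with $(g_k,H_k,\epsilon_H,\delta_k,\zeta,\text{capCG},M)$ obtaining $s_k^{CG}$ and flag outCG; else set $s_k^{CG}=0$, outCG$=$INT-RES. If outCG$\in\{$BND-NEG, BND-NORM$\}$ or ($\|g_k\|>\epsilon_g$ and outCG$=$INT-RES), set $s_k=s_k^{CG}$. Otherwise call Algorithm 3 with $(g_k,H_k,\epsilon_H,\delta_k,\xi,M)$; if it indicates $H_k\succeq-\epsilon_HI$, return $x_k$ (terminate), else take its output as $s_k$. Set $\rho_k=\frac{f_k-f(x_k+s_k)}{m_k(x_k)-m_k(x_k+s_k)}$. If $\rho_k\ge\eta$: $x_{k+1}=x_k+s_k$ and $\delta_{k+1}=\min\{\gamma_2\delta_k,\delta_{\max}\}$ if $\|s_k\|\ge\psi\delta_k$, else $\delta_{k+1}=\delta_k$. If $\rho_k<\eta$: $x_{k+1}=x_k$, $\delta_{k+1}=\gamma_1\|s_k\|$. $\mathcal{K}$ is the set of indices $k$ such that iteration $k$ is completed without termination (for the given realization); $\mathcal{S}=\{k\in\mathcal{K}:\rho_k\ge\eta\}$. Standing assumption: $\{f_k\}$ is bounded below by some $f_{\rm low}\in\mathbb{R}$, and all segments $[x_k,x_k+s_k]$ lie in an open set on which $f$ is twice continuously differentiable with gradient Lipschitz with constant $L_g>0$ and Hessian Lipschitz with constant $L_H>0$. *)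

theory Defs
  imports "HOL-Analysis.Analysis"
begin

text \<open>Vectors of R^n are real^'n; n = CARD('n). Matrices are real^'n^'n,
  quadratic forms are written p \<bullet> (H *v p), and the matrix (spectral) norm is the
  operator norm onorm ((*v) H).\<close>

datatype cg_flag = BND_NEG | BND_NORM | INT_RES | INT_MAX

definition bnd_step :: "real \<Rightarrow> real^'n \<Rightarrow> real^'n \<Rightarrow> real^'n" where
  "bnd_step delta y p = y + (SOME \<sigma>::real. \<sigma> \<ge> 0 \<and> norm (y + \<sigma> *\<^sub>R p) = delta) *\<^sub>R p"

text \<open>The first argument is a fuel counter
  (initially n, so that fuel + j = n); since k_max \<le> n the loop test j < k_max fails
  at the latest when the fuel is exhausted.\<close>
fun tcg_loop :: "nat \<Rightarrow> nat \<Rightarrow> real^'n^'n \<Rightarrow> real^'n \<Rightarrow> real \<Rightarrow> real \<Rightarrow> real \<Rightarrow> real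
                  \<Rightarrow> real^'n \<Rightarrow> real^'n \<Rightarrow> real^'n \<Rightarrow> (real^'n) \<times> cg_flag" where
  "tcg_loop 0 j H g eps delta zeta kmax y r p = (y, INT_MAX)"
| "tcg_loop (Suc fuel) j H g eps delta zeta kmax y r p =
    (if \<not> (real j < kmax) then (y, INT_MAX)
     else (let A = H + mat (2 * eps); q = p \<bullet> (A *v p) in
       if q \<le> eps * (norm p)\<^sup>2 then (bnd_step delta y p, BND_NEG)
       else (let \<alpha> = (norm r)\<^sup>2 / q; y' = y + \<alpha> *\<^sub>R p in
         if norm y' \<ge> delta then (bnd_step delta y p, BND_NORM)
         else (let r' = r + \<alpha> *\<^sub>R (A *v p) in
           if norm r' \<le> zeta / 2 * min (norm g) (eps * norm y') then (y', INT_RES)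
           else (let \<beta> = (norm r')\<^sup>2 / (norm r)\<^sup>2; p' = - r' + \<beta> *\<^sub>R p in
             tcg_loop fuel (Suc j) H g eps delta zeta kmax y' r' p')))))"

definition tcg_kmax :: "nat \<Rightarrow> real \<Rightarrow> real \<Rightarrow> bool \<Rightarrow> real \<Rightarrow> real" where
  "tcg_kmax n eps zeta capCG M =
     (if capCG then
        (let \<kappa> = (M + 2 * eps) / eps in
          min (real n) (1/2 * sqrt \<kappa> * ln (4 * \<kappa> powr (3/2) / zeta)))
      else real n)"

definition tcg :: "real^'n \<Rightarrow> real^'n^'n \<Rightarrow> real \<Rightarrow> real \<Rightarrow> real \<Rightarrow> bool \<Rightarrow> real
                   \<Rightarrow> (real^'n) \<times> cg_flag" where
  "tcg g H eps delta zeta capCG M =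
     tcg_loop CARD('n) 0 H g eps delta zeta (tcg_kmax CARD('n) eps zeta capCG M) 0 g (- g)"

text \<open>None = indication that
  H \<succeq> -eps I (not required to be correct, since the oracle may be randomized);
  Some s = a returned negative curvature step.\<close>
definition meo_spec :: "real^'n \<Rightarrow> real^'n^'n \<Rightarrow> real \<Rightarrow> real \<Rightarrow> (real^'n) option \<Rightarrow> bool" where
  "meo_spec g H eps delta mo =
     (case mo of None \<Rightarrow> True
      | Some s \<Rightarrow> (\<exists>v. norm v = 1 \<and> v \<bullet> (H *v v) \<le> - eps / 2 \<and>
                       (s = delta *\<^sub>R v \<or> s = - (delta *\<^sub>R v)) \<and>
                       g \<bullet> s \<le> 0 \<and> s \<bullet> (H *v s) \<le> - (1/2) * eps * (norm s)\<^sup>2 \<and>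
                       norm s = delta))"

definition alg4_cg :: "(real^'n \<Rightarrow> real^'n) \<Rightarrow> (real^'n \<Rightarrow> real^'n^'n) \<Rightarrow> real \<Rightarrow> real \<Rightarrow> bool \<Rightarrow> real
                       \<Rightarrow> (nat \<Rightarrow> real^'n) \<Rightarrow> (nat \<Rightarrow> real) \<Rightarrow> nat \<Rightarrow> (real^'n) \<times> cg_flag" where
  "alg4_cg g H epsH zeta capCG M x \<delta> k =
     (if g (x k) \<noteq> 0 then tcg (g (x k)) (H (x k)) epsH (\<delta> k) zeta capCG M else (0, INT_RES))"

definition alg4_calls_meo :: "(real^'n \<Rightarrow> real^'n) \<Rightarrow> (real^'n \<Rightarrow> real^'n^'n) \<Rightarrow> real \<Rightarrow> real \<Rightarrow> real
                    \<Rightarrow> bool \<Rightarrow> real \<Rightarrow> (nat \<Rightarrow> real^'n) \<Rightarrow> (nat \<Rightarrow> real) \<Rightarrow> nat \<Rightarrow> bool" where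
  "alg4_calls_meo g H epsg epsH zeta capCG M x \<delta> k =
     (let out = snd (alg4_cg g H epsH zeta capCG M x \<delta> k) in
      \<not> (out \<in> {BND_NEG, BND_NORM} \<or> (norm (g (x k)) > epsg \<and> out = INT_RES)))"

definition alg4_terminates where
  "alg4_terminates g H epsg epsH zeta capCG M x \<delta> mo k =
     (alg4_calls_meo g H epsg epsH zeta capCG M x \<delta> k \<and> mo k = None)"

definition alg4_K where
  "alg4_K g H epsg epsH zeta capCG M x \<delta> mo =
     {k. \<forall>j\<le>k. \<not> alg4_terminates g H epsg epsH zeta capCG M x \<delta> mo j}"

definition model_decrease :: "real^'n \<Rightarrow> real^'n^'n \<Rightarrow> real^'n \<Rightarrow> real" where
  "model_decrease gk Hk s = - (gk \<bullet> s + 1/2 * (s \<bullet> (Hk *v s)))"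

definition alg4_rho where
  "alg4_rho f g H x s k = (f (x k) - f (x k + s k)) / model_decrease (g (x k)) (H (x k)) (s k)"

text \<open>A realization of a run of Algorithm 4: iterates x, radii \<delta>, steps s, and the
  outputs mo of the MEO (consulted only at iterations where the MEO is called).\<close>
definition alg4_run where
  "alg4_run f g H epsg epsH \<gamma>1 \<gamma>2 \<psi> \<delta>max \<eta> zeta capCG M x \<delta> s mo =
    ((\<forall>k. (\<forall>j<k. \<not> alg4_terminates g H epsg epsH zeta capCG M x \<delta> mo j) \<longrightarrow>
          alg4_calls_meo g H epsg epsH zeta capCG M x \<delta> k \<longrightarrow>
          meo_spec (g (x k)) (H (x k)) epsH (\<delta> k) (mo k)) \<and>
     (\<forall>k \<in> alg4_K g H epsg epsH zeta capCG M x \<delta> mo.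
        s k = (if alg4_calls_meo g H epsg epsH zeta capCG M x \<delta> k then the (mo k)
               else fst (alg4_cg g H epsH zeta capCG M x \<delta> k)) \<and>
        (if alg4_rho f g H x s k \<ge> \<eta> then
           x (Suc k) = x k + s k \<and>
           \<delta> (Suc k) = (if norm (s k) \<ge> \<psi> * \<delta> k then min (\<gamma>2 * \<delta> k) \<delta>max else \<delta> k)
         else x (Suc k) = x k \<and> \<delta> (Suc k) = \<gamma>1 * norm (s k))))"

definition alg4_S where
  "alg4_S f g H epsg epsH \<eta> zeta capCG M x \<delta> s mo =
     {k \<in> alg4_K g H epsg epsH zeta capCG M x \<delta> mo. alg4_rho f g H x s k \<ge> \<eta>}"

end

theory Submission
  imports Defs
begin

fun cgs :: "real^'n^'n \<Rightarrow> real^'n \<Rightarrow> nat \<Rightarrow> (real^'n) \<times> (real^'n) \<times> (real^'n)" where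
  "cgs A g 0 = (0, g, -g)"
| "cgs A g (Suc j) = (case cgs A g j of (y, r, p) \<Rightarrow>
     (let \<alpha> = (norm r)\<^sup>2 / (p \<bullet> (A *v p)); y' = y + \<alpha> *\<^sub>R p; r' = r + \<alpha> *\<^sub>R (A *v p);
          \<beta> = (norm r')\<^sup>2 / (norm r)\<^sup>2 in (y', r', - r' + \<beta> *\<^sub>R p)))"

definition "cY A g j = fst (cgs A g j)"
definition "cR A g j = fst (snd (cgs A g j))"
definition "cP A g j = snd (snd (cgs A g j))"
definition "cal A g j = (norm (cR A g j))\<^sup>2 / (cP A g j \<bullet> (A *v cP A g j))"

lemma cgs_0: "cY A g 0 = 0" "cR A g 0 = g" "cP A g 0 = - g"
  by (simp_all add: cY_def cR_def cP_def)

lemma cgs_Suc: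
  "cY A g (Suc j) = cY A g j + cal A g j *\<^sub>R cP A g j"
  "cR A g (Suc j) = cR A g j + cal A g j *\<^sub>R (A *v cP A g j)"
  "cP A g (Suc j) = - cR A g (Suc j) + ((norm (cR A g (Suc j)))\<^sup>2 / (norm (cR A g j))\<^sup>2) *\<^sub>R cP A g j"
  by (simp_all add: cY_def cR_def cP_def cal_def Let_def split: prod.splits)


definition "ccont A g eps delta zeta l =
   (cP A g l \<bullet> (A *v cP A g l) > eps * (norm (cP A g l))\<^sup>2 \<and> norm (cY A g (Suc l)) < delta \<and>
    norm (cR A g (Suc l)) > zeta / 2 * min (norm g) (eps * norm (cY A g (Suc l))))"

definition "cspec A g eps delta zeta i res =
   ((snd res = BND_NEG \<longrightarrow> fst res = bnd_step delta (cY A g i) (cP A g i) \<and>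
        cP A g i \<bullet> (A *v cP A g i) \<le> eps * (norm (cP A g i))\<^sup>2) \<and>
    (snd res = BND_NORM \<longrightarrow> fst res = bnd_step delta (cY A g i) (cP A g i) \<and>
        cP A g i \<bullet> (A *v cP A g i) > eps * (norm (cP A g i))\<^sup>2 \<and> norm (cY A g (Suc i)) \<ge> delta) \<and>
    (snd res = INT_RES \<longrightarrow> fst res = cY A g (Suc i) \<and>
        cP A g i \<bullet> (A *v cP A g i) > eps * (norm (cP A g i))\<^sup>2 \<and> norm (cY A g (Suc i)) < delta \<and>
        norm (cR A g (Suc i)) \<le> zeta / 2 * min (norm g) (eps * norm (cY A g (Suc i)))))"

lemma tcg_loop_char:
  assumes "A = H + mat (2 * eps)"
  shows "\<exists>i\<ge>j. (\<forall>l. j \<le> l \<and> l < i \<longrightarrow> ccont A g eps delta zeta l) \<and>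
     cspec A g eps delta zeta i (tcg_loop fuel j H g eps delta zeta kmax (cY A g j) (cR A g j) (cP A g j))"
proof (induction fuel arbitrary: j)
  case 0
  show ?case by (intro exI[of _ j]) (auto simp: cspec_def)
next
  case (Suc fuel)
  note IH = Suc.IH[of "Suc j"]
  show ?case
  proof (cases "real j < kmax")
    case False
    then show ?thesis by (intro exI[of _ j]) (auto simp add: cspec_def)
  next
    case True
    note defs = cgs_Suc[of A g j, unfolded cal_def, symmetric]
    show ?thesis
    proof (cases "cP A g j \<bullet> (A *v cP A g j) \<le> eps * (norm (cP A g j))\<^sup>2")
      case c1: True
      then show ?thesis using True by (intro exI[of _ j]) (auto simp add: cspec_def assms[symmetric] Let_def)
    next
      case c1: False
      show ?thesis
      proof (cases "norm (cY A g (Suc j)) \<ge> delta")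
        case c2: True
        then show ?thesis using True c1 by (intro exI[of _ j]) (auto simp add: cspec_def assms[symmetric] Let_def defs)
      next
        case c2: False
        show ?thesis
        proof (cases "norm (cR A g (Suc j)) \<le> zeta / 2 * min (norm g) (eps * norm (cY A g (Suc j)))")
          case c3: True
          then show ?thesis using True c1 c2 by (intro exI[of _ j]) (auto simp add: cspec_def assms[symmetric] Let_def defs)
        next
          case c3: False
          obtain i where i: "i \<ge> Suc j" "\<forall>l. Suc j \<le> l \<and> l < i \<longrightarrow> ccont A g eps delta zeta l"
            "cspec A g eps delta zeta i (tcg_loop fuel (Suc j) H g eps delta zeta kmax (cY A g (Suc j)) (cR A g (Suc j)) (cP A g (Suc j)))"
            using IH by blast
          have eq: "tcg_loop (Suc fuel) j H g eps delta zeta kmax (cY A g j) (cR A g j) (cP A g j)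
             = tcg_loop fuel (Suc j) H g eps delta zeta kmax (cY A g (Suc j)) (cR A g (Suc j)) (cP A g (Suc j))"
          proof -
            have pp: "((norm (cR A g (Suc j)))\<^sup>2 / (norm (cR A g j))\<^sup>2) *\<^sub>R cP A g j - cR A g (Suc j) = cP A g (Suc j)"
              by (simp add: cgs_Suc(3))
            show ?thesis using True c1 c2 c3 by (simp add: assms[symmetric] Let_def defs pp)
          qed
          have "ccont A g eps delta zeta j" using c1 c2 c3 by (simp add: ccont_def)
          then have "\<forall>l. j \<le> l \<and> l < i \<longrightarrow> ccont A g eps delta zeta l"
            using i(2) by (metis Suc_leI le_neq_implies_less)
          then show ?thesis using i eq by (intro exI[of _ i]) auto
        qed
      qed
    qed
  qed
qed

lemma cg_resid: "cR A g j = g + A *v cY A g j"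
  by (induction j) (simp_all add: cgs_0 cgs_Suc matrix_vector_right_distrib matrix_vector_mult_scaleR)

lemma cg_R_P_Suc: "cR A g (Suc j) = ((norm (cR A g (Suc j)))\<^sup>2 / (norm (cR A g j))\<^sup>2) *\<^sub>R cP A g j - cP A g (Suc j)"
  by (simp add: cgs_Suc(3))

lemma norm_add_scale_sq: "(norm (y + t *\<^sub>R p))\<^sup>2 = (norm y)\<^sup>2 + 2 * t * (y \<bullet> p) + t\<^sup>2 * (norm p)\<^sup>2"
  for y p :: "'a::real_inner"
proof -
  have "(norm (y + t *\<^sub>R p))\<^sup>2 = y \<bullet> y + 2 * t * (y \<bullet> p) + t * t * (p \<bullet> p)"
    by (simp add: power2_norm_eq_inner inner_add_left inner_add_right inner_commute[of p y] algebra_simps)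
  then show ?thesis by (simp only: power2_norm_eq_inner[symmetric] power2_eq_square)
qed

lemma bnd_step_ex:
  fixes y p :: "real^'n"
  assumes y: "norm y < delta" and p: "p \<noteq> 0"
  shows "\<exists>\<sigma>\<ge>0. bnd_step delta y p = y + \<sigma> *\<^sub>R p \<and> norm (y + \<sigma> *\<^sub>R p) = delta"
proof -
  define b where "b = (delta + norm y) / norm p"
  have np: "norm p > 0" using p by simp
  have dy: "delta + norm y \<ge> 0" using y norm_ge_zero[of y] by linarith
  then have b0: "b \<ge> 0" using np by (simp add: b_def)
  have "norm (b *\<^sub>R p) = delta + norm y" using np b0 dy by (simp add: b_def)
  moreover have "norm (b *\<^sub>R p) \<le> norm (y + b *\<^sub>R p) + norm y"
  proof -
    have "b *\<^sub>R p = (y + b *\<^sub>R p) - y" by simp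
    then show ?thesis by (metis norm_triangle_ineq4)
  qed
  ultimately have fb: "delta \<le> norm (y + b *\<^sub>R p)" by simp
  have "continuous_on {0..b} (\<lambda>t. norm (y + t *\<^sub>R p))"
    by (intro continuous_intros)
  then obtain t where t: "t \<ge> 0" "t \<le> b" "norm (y + t *\<^sub>R p) = delta"
    using IVT'[of "\<lambda>t. norm (y + t *\<^sub>R p)" 0 delta b] y fb b0 by auto
  then have ex: "\<exists>\<sigma>. \<sigma> \<ge> 0 \<and> norm (y + \<sigma> *\<^sub>R p) = delta" by blast
  define \<sigma> where "\<sigma> = (SOME \<sigma>::real. \<sigma> \<ge> 0 \<and> norm (y + \<sigma> *\<^sub>R p) = delta)"
  have "\<sigma> \<ge> 0 \<and> norm (y + \<sigma> *\<^sub>R p) = delta" unfolding \<sigma>_def by (rule someI_ex[OF ex])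
  moreover have "bnd_step delta y p = y + \<sigma> *\<^sub>R p" by (simp add: bnd_step_def \<sigma>_def)
  ultimately show ?thesis by blast
qed

definition "qAf A g y = g \<bullet> y + 1/2 * (y \<bullet> (A *v y))"

locale cgloc =
  fixes A :: "real^'n^'n" and g :: "real^'n" and eps delta zeta :: real and i :: nat
  assumes sym: "\<And>u v. (A *v u) \<bullet> v = u \<bullet> (A *v v)"
    and g0: "g \<noteq> 0" and eps0: "eps \<ge> 0" and zeta0: "zeta \<ge> 0"
    and cont: "\<And>l. l < i \<Longrightarrow> ccont A g eps delta zeta l"
begin

abbreviation "Y \<equiv> cY A g"
abbreviation "R \<equiv> cR A g"
abbreviation "P \<equiv> cP A g"
abbreviation "al \<equiv> cal A g"

lemma R_nz: "l \<le> i \<Longrightarrow> R l \<noteq> 0"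
proof (cases l)
  case 0 then show ?thesis using g0 by (simp add: cgs_0)
next
  case (Suc m)
  assume "l \<le> i"
  then have "ccont A g eps delta zeta m" using cont Suc by simp
  then have "norm (R (Suc m)) > zeta / 2 * min (norm g) (eps * norm (Y (Suc m)))" by (simp add: ccont_def)
  moreover have "zeta / 2 * min (norm g) (eps * norm (Y (Suc m))) \<ge> 0" using zeta0 eps0 by simp
  ultimately show ?thesis using Suc by auto
qed

lemma curv_pos: "l < i \<Longrightarrow> P l \<bullet> (A *v P l) > 0"
proof -
  assume "l < i"
  then have "P l \<bullet> (A *v P l) > eps * (norm (P l))\<^sup>2" using cont by (simp add: ccont_def)
  moreover have "eps * (norm (P l))\<^sup>2 \<ge> 0" using eps0 by simp
  ultimately show ?thesis by linarith
qed

lemma al_pos: "l < i \<Longrightarrow> al l > 0"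
  using curv_pos[of l] R_nz[of l] by (simp add: cal_def)

lemma al_eq: "l < i \<Longrightarrow> al l * (P l \<bullet> (A *v P l)) = (norm (R l))\<^sup>2"
  using curv_pos[of l] by (simp add: cal_def)

lemma orth: "l \<le> i \<Longrightarrow> (\<forall>m<l. R l \<bullet> R m = 0 \<and> R l \<bullet> P m = 0 \<and> P l \<bullet> (A *v P m) = 0) \<and> R l \<bullet> P l = - (norm (R l))\<^sup>2"
proof (induction l)
  case 0
  then show ?case by (simp add: cgs_0 power2_norm_eq_inner)
next
  case (Suc l)
  then have li: "l < i" by simp
  have IH: "\<And>m. m < l \<Longrightarrow> R l \<bullet> R m = 0 \<and> R l \<bullet> P m = 0 \<and> P l \<bullet> (A *v P m) = 0"
     and IHc: "R l \<bullet> P l = - (norm (R l))\<^sup>2" using Suc by auto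
  define a where "a = A *v P l"
  define \<alpha> where "\<alpha> = al l"
  have apos: "\<alpha> > 0" using al_pos[OF li] by (simp add: \<alpha>_def)
  have aeq: "\<alpha> * (P l \<bullet> a) = (norm (R l))\<^sup>2" using al_eq[OF li] by (simp add: \<alpha>_def a_def)
  have Rs: "R (Suc l) = R l + \<alpha> *\<^sub>R a" by (simp add: cgs_Suc \<alpha>_def a_def)
  have aP: "\<And>m. m < l \<Longrightarrow> a \<bullet> P m = 0"
    using IH by (simp add: a_def sym)
  have aRm: "\<And>m. m \<le> l \<Longrightarrow> a \<bullet> R m = (if m = l then - (P l \<bullet> a) else 0)"
  proof -
    fix m assume ml: "m \<le> l"
    show "a \<bullet> R m = (if m = l then - (P l \<bullet> a) else 0)"
    proof (cases m)
      case 0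
      then show ?thesis using aP[of 0] by (auto simp: cgs_0 inner_commute)
    next
      case (Suc m')
      obtain c where "R m = c *\<^sub>R P m' - P m"
        using cg_R_P_Suc[of A g m'] Suc by blast
      then have "a \<bullet> R m = c * (a \<bullet> P m') - a \<bullet> P m" by (simp add: inner_diff_right)
      moreover have "a \<bullet> P m' = 0" using aP[of m'] Suc ml by simp
      moreover have "m \<noteq> l \<Longrightarrow> a \<bullet> P m = 0" using aP ml by simp
      ultimately show ?thesis by (auto simp: inner_commute)
    qed
  qed
  have RsPl: "R (Suc l) \<bullet> P l = 0"
  proof -
    have "R (Suc l) \<bullet> P l = R l \<bullet> P l + \<alpha> * (a \<bullet> P l)" by (simp add: Rs inner_add_left)
    also have "a \<bullet> P l = P l \<bullet> a" by (rule inner_commute)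
    finally show ?thesis using IHc aeq by simp
  qed
  have RsRl: "R (Suc l) \<bullet> R l = 0"
    using aRm[of l] aeq by (simp add: Rs inner_add_left power2_norm_eq_inner)
  have RsRm: "\<And>m. m < l \<Longrightarrow> R (Suc l) \<bullet> R m = 0"
    using IH aRm by (simp add: Rs inner_add_left)
  have RsPm: "\<And>m. m < l \<Longrightarrow> R (Suc l) \<bullet> P m = 0"
    using IH aP by (simp add: Rs inner_add_left)
  have RsR: "\<And>m. m < Suc l \<Longrightarrow> R (Suc l) \<bullet> R m = 0"
    using RsRl RsRm less_Suc_eq by auto
  have Rnz: "R l \<noteq> 0" using R_nz li by simp
  define \<beta> where "\<beta> = (norm (R (Suc l)))\<^sup>2 / (norm (R l))\<^sup>2"
  have Ps: "P (Suc l) = - R (Suc l) + \<beta> *\<^sub>R P l" by (simp add: cgs_Suc \<beta>_def)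
  have PsAPl: "P (Suc l) \<bullet> a = 0"
  proof -
    have "R (Suc l) \<bullet> (\<alpha> *\<^sub>R a) = (norm (R (Suc l)))\<^sup>2"
    proof -
      have "\<alpha> *\<^sub>R a = R (Suc l) - R l" by (simp add: Rs)
      then show ?thesis using RsRl by (simp add: inner_diff_right power2_norm_eq_inner)
    qed
    then have "R (Suc l) \<bullet> a = (norm (R (Suc l)))\<^sup>2 / \<alpha>" using apos by (simp add: field_simps)
    moreover have "\<beta> * (P l \<bullet> a) = (norm (R (Suc l)))\<^sup>2 / \<alpha>"
      using aeq apos Rnz by (simp add: \<beta>_def field_simps)
    ultimately show ?thesis by (simp add: Ps inner_diff_left)
  qed
  have PsAPm: "\<And>m. m < l \<Longrightarrow> P (Suc l) \<bullet> (A *v P m) = 0"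
  proof -
    fix m assume ml: "m < l"
    then have mi: "m < i" using li by simp
    have e: "al m *\<^sub>R (A *v P m) = R (Suc m) - R m" by (simp add: cgs_Suc)
    have "A *v P m = (1 / al m) *\<^sub>R (al m *\<^sub>R (A *v P m))" using al_pos[OF mi] by simp
    then have "A *v P m = (1 / al m) *\<^sub>R (R (Suc m) - R m)" using e by simp
    moreover have "R (Suc l) \<bullet> R (Suc m) = 0" "R (Suc l) \<bullet> R m = 0" using RsR ml by auto
    moreover have "P l \<bullet> (A *v P m) = 0" using IH ml by simp
    ultimately have "R (Suc l) \<bullet> (A *v P m) = 0" by (simp add: inner_diff_right)
    moreover have "P (Suc l) \<bullet> (A *v P m) = - (R (Suc l) \<bullet> (A *v P m)) + \<beta> * (P l \<bullet> (A *v P m))"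
      by (simp add: Ps inner_diff_left)
    ultimately show "P (Suc l) \<bullet> (A *v P m) = 0" using IH ml by simp
  qed
  have c: "R (Suc l) \<bullet> P (Suc l) = - (norm (R (Suc l)))\<^sup>2"
    using RsPl by (simp add: Ps inner_diff_right power2_norm_eq_inner)
  show ?case
  proof (intro conjI allI impI c)
    fix m assume m: "m < Suc l"
    show "R (Suc l) \<bullet> R m = 0" using RsR m by simp
    show "R (Suc l) \<bullet> P m = 0" using RsPl RsPm m less_Suc_eq by auto
    show "P (Suc l) \<bullet> (A *v P m) = 0" using PsAPl PsAPm m less_Suc_eq a_def by auto
  qed
qed


abbreviation "qA \<equiv> qAf A g"

lemma qA_step: "qA (y + t *\<^sub>R p) = qA y + t * ((g + A *v y) \<bullet> p) + t\<^sup>2 / 2 * (p \<bullet> (A *v p))"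
proof -
  have s1: "p \<bullet> (A *v y) = y \<bullet> (A *v p)" using sym[of y p] by (simp add: inner_commute)
  show ?thesis
    by (simp add: qAf_def matrix_vector_right_distrib matrix_vector_mult_scaleR inner_add_left inner_add_right
        s1 sym power2_eq_square algebra_simps)
qed

lemma Y_R: "l \<le> k \<Longrightarrow> k \<le> i \<Longrightarrow> Y l \<bullet> R k = 0"
proof (induction l)
  case 0 then show ?case by (simp add: cgs_0)
next
  case (Suc l)
  have "R k \<bullet> P l = 0" using orth[of k] Suc.prems by simp
  then have "P l \<bullet> R k = 0" by (simp add: inner_commute)
  then show ?case using Suc by (simp add: cgs_Suc inner_add_left)
qed

lemma Y_P: "l \<le> i \<Longrightarrow> Y l \<bullet> P l \<ge> 0"
proof (induction l)
  case 0 then show ?case by (simp add: cgs_0)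
next
  case (Suc l)
  have a: "al l > 0" using al_pos Suc.prems by simp
  have "Y (Suc l) \<bullet> R (Suc l) = 0" using Y_R Suc.prems by simp
  moreover have "Y (Suc l) \<bullet> P l = Y l \<bullet> P l + al l * (norm (P l))\<^sup>2"
    by (simp add: cgs_Suc inner_add_left power2_norm_eq_inner)
  moreover have "Y l \<bullet> P l \<ge> 0" using Suc by simp
  ultimately have "Y (Suc l) \<bullet> P (Suc l) = ((norm (R (Suc l)))\<^sup>2 / (norm (R l))\<^sup>2) * (Y l \<bullet> P l + al l * (norm (P l))\<^sup>2)"
    by (simp add: cgs_Suc(3)[of A g l] inner_diff_right)
  moreover have "Y l \<bullet> P l + al l * (norm (P l))\<^sup>2 \<ge> 0" using a \<open>Y l \<bullet> P l \<ge> 0\<close> by simp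
  ultimately show ?case by simp
qed

lemma q_Suc: "l \<le> i \<Longrightarrow> P l \<bullet> (A *v P l) > 0 \<Longrightarrow> qA (Y (Suc l)) = qA (Y l) - al l * (norm (R l))\<^sup>2 / 2"
proof -
  assume li: "l \<le> i" and c: "P l \<bullet> (A *v P l) > 0"
  have rp: "(g + A *v Y l) \<bullet> P l = - (norm (R l))\<^sup>2" using orth[OF li] cg_resid[of A g l] by simp
  have ae: "al l * (P l \<bullet> (A *v P l)) = (norm (R l))\<^sup>2" using c by (simp add: cal_def)
  have "qA (Y (Suc l)) = qA (Y l) + al l * (- (norm (R l))\<^sup>2) + (al l)\<^sup>2 / 2 * (P l \<bullet> (A *v P l))"
    by (simp add: cgs_Suc qA_step rp)
  also have "(al l)\<^sup>2 / 2 * (P l \<bullet> (A *v P l)) = al l * (norm (R l))\<^sup>2 / 2"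
    using ae by (simp add: power2_eq_square)
  finally show ?thesis by simp
qed

lemma q_le0: "l \<le> i \<Longrightarrow> qA (Y l) \<le> 0"
proof (induction l)
  case 0 then show ?case by (simp add: cgs_0 qAf_def)
next
  case (Suc l)
  then have "l < i" by simp
  then have "qA (Y (Suc l)) = qA (Y l) - al l * (norm (R l))\<^sup>2 / 2" using q_Suc curv_pos by simp
  moreover have "al l > 0" using al_pos \<open>l < i\<close> by simp
  moreover have "al l * (norm (R l))\<^sup>2 \<ge> 0" using \<open>al l > 0\<close> by simp
  ultimately show ?case using Suc by linarith
qed

lemma Y_lt: "delta > 0 \<Longrightarrow> l \<le> i \<Longrightarrow> norm (Y l) < delta"
proof (cases l)
  case 0 then show "delta > 0 \<Longrightarrow> ?thesis" by (simp add: cgs_0)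
next
  case (Suc m)
  assume "l \<le> i" then have "ccont A g eps delta zeta m" using cont Suc by simp
  then show ?thesis using Suc by (simp add: ccont_def)
qed

lemma P_nz: "l \<le> i \<Longrightarrow> P l \<noteq> 0"
  using orth[of l] R_nz[of l] by auto


lemma q_Suc_lt: "P i \<bullet> (A *v P i) > 0 \<Longrightarrow> qA (Y (Suc i)) < 0"
proof -
  assume c: "P i \<bullet> (A *v P i) > 0"
  have "qA (Y (Suc i)) = qA (Y i) - al i * (norm (R i))\<^sup>2 / 2" using q_Suc c by simp
  moreover have "al i > 0" using c R_nz[of i] by (simp add: cal_def)
  moreover have "(norm (R i))\<^sup>2 > 0" using R_nz[of i] by simp
  moreover have "qA (Y i) \<le> 0" using q_le0 by simp
  moreover have "al i * (norm (R i))\<^sup>2 > 0" using calculation by (intro mult_pos_pos) auto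
  ultimately show ?thesis by linarith
qed

lemma bnd_norm_q:
  assumes d: "delta > 0" and c: "P i \<bullet> (A *v P i) > eps * (norm (P i))\<^sup>2"
    and yn: "norm (Y (Suc i)) \<ge> delta"
  shows "qA (bnd_step delta (Y i) (P i)) \<le> 0 \<and> norm (bnd_step delta (Y i) (P i)) = delta"
proof -
  obtain \<sigma> where s: "\<sigma> \<ge> 0" "bnd_step delta (Y i) (P i) = Y i + \<sigma> *\<^sub>R P i" "norm (Y i + \<sigma> *\<^sub>R P i) = delta"
    using bnd_step_ex[OF Y_lt[OF d] P_nz] by blast
  have "eps * (norm (P i))\<^sup>2 \<ge> 0" using eps0 by simp
  then have cp: "P i \<bullet> (A *v P i) > 0" using c by linarith
  define \<alpha> where "\<alpha> = al i"
  have apos: "\<alpha> > 0" using cp R_nz[of i] by (simp add: cal_def \<alpha>_def)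
  have ae: "\<alpha> * (P i \<bullet> (A *v P i)) = (norm (R i))\<^sup>2" using cp by (simp add: cal_def \<alpha>_def)
  define u where "u = Y i \<bullet> P i"
  define np where "np = (norm (P i))\<^sup>2"
  define D where "D = delta\<^sup>2 - (norm (Y i))\<^sup>2"
  have "(norm (Y i))\<^sup>2 < delta\<^sup>2" using Y_lt[OF d, of i] by (simp add: power_strict_mono)
  then have D0: "D > 0" unfolding D_def by simp
  have hexp: "\<And>t. (norm (Y i + t *\<^sub>R P i))\<^sup>2 = (norm (Y i))\<^sup>2 + 2 * t * u + t\<^sup>2 * np"
    by (simp add: norm_add_scale_sq u_def np_def)
  have hs: "2 * \<sigma> * u + \<sigma>\<^sup>2 * np = D" using hexp[of \<sigma>] s(3) by (simp add: D_def)
  have ha: "2 * \<alpha> * u + \<alpha>\<^sup>2 * np \<ge> D"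
  proof -
    have "delta\<^sup>2 \<le> (norm (Y (Suc i)))\<^sup>2" using yn d by (simp add: power_mono)
    then show ?thesis using hexp[of \<alpha>] by (simp add: D_def cgs_Suc \<alpha>_def)
  qed
  have np0: "np \<ge> 0" by (simp add: np_def)
  have sa: "\<sigma> \<le> \<alpha>"
  proof (rule ccontr)
    assume "\<not> \<sigma> \<le> \<alpha>"
    then have as: "\<alpha> < \<sigma>" by simp
    have "\<sigma> * (2 * \<alpha> * u + \<alpha>\<^sup>2 * np) \<ge> \<sigma> * D" using ha s(1) by (simp add: mult_left_mono)
    moreover have "\<alpha> * (2 * \<sigma> * u + \<sigma>\<^sup>2 * np) = \<alpha> * D" using hs by simp
    ultimately have "\<alpha> * \<sigma> * np * (\<alpha> - \<sigma>) \<ge> (\<sigma> - \<alpha>) * D"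
      by (simp add: power2_eq_square algebra_simps)
    moreover have "\<alpha> * \<sigma> * np * (\<alpha> - \<sigma>) \<le> 0" using apos as np0
      by (simp add: mult_nonneg_nonpos)
    moreover have "(\<sigma> - \<alpha>) * D > 0" using as D0 by simp
    ultimately show False by linarith
  qed
  have rp: "(g + A *v Y i) \<bullet> P i = - (norm (R i))\<^sup>2" using orth[of i] cg_resid[of A g i] by simp
  have "qA (Y i + \<sigma> *\<^sub>R P i) = qA (Y i) - \<sigma> * (norm (R i))\<^sup>2 + \<sigma>\<^sup>2 / 2 * (P i \<bullet> (A *v P i))"
    by (simp add: qA_step rp)
  moreover have "\<sigma> * (P i \<bullet> (A *v P i)) \<le> (norm (R i))\<^sup>2"
    using mult_right_mono[OF sa less_imp_le[OF cp]] ae by simp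
  then have "\<sigma>\<^sup>2 / 2 * (P i \<bullet> (A *v P i)) \<le> \<sigma> * (norm (R i))\<^sup>2 / 2"
    using s(1) by (simp add: power2_eq_square mult.assoc mult_left_mono)
  moreover have "qA (Y i) \<le> 0" using q_le0 by simp
  moreover have "\<sigma> * (norm (R i))\<^sup>2 \<ge> 0" using s(1) by simp
  ultimately have "qA (Y i + \<sigma> *\<^sub>R P i) \<le> 0" by linarith
  then show ?thesis using s by simp
qed

lemma bnd_neg_q:
  assumes d: "delta > 0" and c: "P i \<bullet> (A *v P i) \<le> eps * (norm (P i))\<^sup>2"
  shows "qA (bnd_step delta (Y i) (P i)) \<le> eps * delta\<^sup>2 / 2 \<and> norm (bnd_step delta (Y i) (P i)) = delta"
proof -
  obtain \<sigma> where s: "\<sigma> \<ge> 0" "bnd_step delta (Y i) (P i) = Y i + \<sigma> *\<^sub>R P i" "norm (Y i + \<sigma> *\<^sub>R P i) = delta"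
    using bnd_step_ex[OF Y_lt[OF d] P_nz] by blast
  have yp: "Y i \<bullet> P i \<ge> 0" using Y_P by simp
  have hexp: "(norm (Y i + \<sigma> *\<^sub>R P i))\<^sup>2 = (norm (Y i))\<^sup>2 + 2 * \<sigma> * (Y i \<bullet> P i) + \<sigma>\<^sup>2 * (norm (P i))\<^sup>2"
    by (rule norm_add_scale_sq)
  have sp: "\<sigma>\<^sup>2 * (norm (P i))\<^sup>2 \<le> delta\<^sup>2"
  proof -
    have "2 * \<sigma> * (Y i \<bullet> P i) \<ge> 0" using s(1) yp by simp
    moreover have "(norm (Y i))\<^sup>2 \<ge> 0" by simp
    moreover have "(norm (Y i + \<sigma> *\<^sub>R P i))\<^sup>2 = delta\<^sup>2" using s(3) by simp
    ultimately show ?thesis using hexp by linarith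
  qed
  have rp: "(g + A *v Y i) \<bullet> P i = - (norm (R i))\<^sup>2" using orth[of i] cg_resid[of A g i] by simp
  have "qA (Y i + \<sigma> *\<^sub>R P i) = qA (Y i) - \<sigma> * (norm (R i))\<^sup>2 + \<sigma>\<^sup>2 / 2 * (P i \<bullet> (A *v P i))"
    by (simp add: qA_step rp)
  moreover have "\<sigma>\<^sup>2 * (P i \<bullet> (A *v P i)) \<le> \<sigma>\<^sup>2 * (eps * (norm (P i))\<^sup>2)"
    using c by (simp add: mult_left_mono)
  moreover have "\<sigma>\<^sup>2 * (eps * (norm (P i))\<^sup>2) \<le> eps * delta\<^sup>2"
    using mult_left_mono[OF sp eps0] by (simp add: algebra_simps)
  moreover have "qA (Y i) \<le> 0" using q_le0 by simp
  moreover have "\<sigma> * (norm (R i))\<^sup>2 \<ge> 0" using s(1) by simp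
  ultimately have "qA (Y i + \<sigma> *\<^sub>R P i) \<le> eps * delta\<^sup>2 / 2" by linarith
  then show ?thesis using s by simp
qed
end


lemma line_deriv_scalar:
  fixes F :: "real^'n \<Rightarrow> real"
  assumes "(F has_derivative (\<lambda>h. c \<bullet> h)) (at (x + t *\<^sub>R s))"
  shows "((\<lambda>t. F (x + t *\<^sub>R s)) has_real_derivative (c \<bullet> s)) (at t)"
proof -
  have lin: "((\<lambda>t. x + t *\<^sub>R s) has_derivative (\<lambda>h. h *\<^sub>R s)) (at t)"
    by (auto intro!: derivative_eq_intros)
  have "((\<lambda>t. F (x + t *\<^sub>R s)) has_derivative (\<lambda>h. c \<bullet> (h *\<^sub>R s))) (at t)"
    using has_derivative_compose[OF lin assms] .
  moreover have "(\<lambda>h. c \<bullet> (h *\<^sub>R s)) = (*) (c \<bullet> s)" by (auto simp: fun_eq_iff)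
  ultimately show ?thesis by (simp add: has_field_derivative_def)
qed

lemma line_deriv_vec:
  fixes G :: "real^'n \<Rightarrow> real^'n"
  assumes "(G has_derivative (\<lambda>h. M *v h)) (at (x + t *\<^sub>R s))"
  shows "((\<lambda>t. w \<bullet> G (x + t *\<^sub>R s)) has_real_derivative (w \<bullet> (M *v s))) (at t)"
proof -
  have lin: "((\<lambda>t. x + t *\<^sub>R s) has_derivative (\<lambda>h. h *\<^sub>R s)) (at t)"
    by (auto intro!: derivative_eq_intros)
  have "((\<lambda>t. G (x + t *\<^sub>R s)) has_derivative (\<lambda>h. M *v (h *\<^sub>R s))) (at t)"
    using has_derivative_compose[OF lin assms] .
  then have "((\<lambda>t. w \<bullet> G (x + t *\<^sub>R s)) has_derivative (\<lambda>h. w \<bullet> (M *v (h *\<^sub>R s)))) (at t)"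
    by (rule has_derivative_inner_right)
  moreover have "(\<lambda>h. w \<bullet> (M *v (h *\<^sub>R s))) = (*) (w \<bullet> (M *v s))"
    by (auto simp: fun_eq_iff matrix_vector_mult_scaleR)
  ultimately show ?thesis by (simp add: has_field_derivative_def)
qed

locale smooth =
  fixes f :: "real^'n \<Rightarrow> real" and g :: "real^'n \<Rightarrow> real^'n" and H :: "real^'n \<Rightarrow> real^'n^'n"
    and U :: "(real^'n) set" and LH :: real
  assumes U_open: "open U"
    and grad: "\<And>y. y \<in> U \<Longrightarrow> (f has_derivative (\<lambda>h. g y \<bullet> h)) (at y)"
    and hess: "\<And>y. y \<in> U \<Longrightarrow> (g has_derivative (\<lambda>h. H y *v h)) (at y)"
    and LH_pos: "LH > 0"
    and H_lip: "\<And>y z. y \<in> U \<Longrightarrow> z \<in> U \<Longrightarrow> onorm (\<lambda>v. (H y - H z) *v v) \<le> LH * norm (y - z)"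
begin

lemma H_lip_inner:
  assumes "y \<in> U" "z \<in> U"
  shows "\<bar>u \<bullet> (H y *v v) - u \<bullet> (H z *v v)\<bar> \<le> LH * norm (y - z) * norm u * norm v"
proof -
  have bl: "bounded_linear (\<lambda>v. (H y - H z) *v v)" by (rule matrix_vector_mul_bounded_linear)
  have "norm ((H y - H z) *v v) \<le> onorm (\<lambda>v. (H y - H z) *v v) * norm v"
    using onorm[OF bl] .
  also have "\<dots> \<le> LH * norm (y - z) * norm v"
    using H_lip[OF assms] by (simp add: mult_right_mono)
  finally have n: "norm ((H y - H z) *v v) \<le> LH * norm (y - z) * norm v" .
  have "\<bar>u \<bullet> ((H y - H z) *v v)\<bar> \<le> norm u * norm ((H y - H z) *v v)"
    by (rule Cauchy_Schwarz_ineq2)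
  also have "\<dots> \<le> norm u * (LH * norm (y - z) * norm v)"
    using n by (simp add: mult_left_mono)
  finally show ?thesis by (simp add: matrix_vector_mult_diff_rdistrib inner_diff_right algebra_simps)
qed


lemma seg_pt: "0 \<le> t \<Longrightarrow> t \<le> 1 \<Longrightarrow> x + t *\<^sub>R s \<in> closed_segment x (x + s)"
  unfolding closed_segment_def
  by (rule CollectI, rule exI[of _ t]) (simp add: algebra_simps)

lemma taylor_f:
  assumes seg: "closed_segment x (x + s) \<subseteq> U"
  shows "f (x + s) \<le> f x + g x \<bullet> s + 1/2 * (s \<bullet> (H x *v s)) + LH / 6 * norm s ^ 3"
proof -
  have inU: "\<And>t. 0 \<le> t \<Longrightarrow> t \<le> 1 \<Longrightarrow> x + t *\<^sub>R s \<in> U" using seg seg_pt by blast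
  have x0: "x \<in> U" using inU[of 0] by simp
  define p1 where "p1 t = s \<bullet> g (x + t *\<^sub>R s)" for t
  define p2 where "p2 t = s \<bullet> (H (x + t *\<^sub>R s) *v s)" for t
  define c where "c = LH * norm s ^ 3 / 6"
  define ps where "ps t = f (x + t *\<^sub>R s) - f x - t * p1 0 - t\<^sup>2 / 2 * p2 0 - c * t ^ 3" for t
  define ps' where "ps' t = p1 t - p1 0 - t * p2 0 - 3 * c * t\<^sup>2" for t
  define ps'' where "ps'' t = p2 t - p2 0 - 6 * c * t" for t
  have d0: "((\<lambda>t. f (x + t *\<^sub>R s)) has_real_derivative p1 t) (at t)" if "0 \<le> t" "t \<le> 1" for t
  proof -
    have "((\<lambda>t. f (x + t *\<^sub>R s)) has_real_derivative (g (x + t *\<^sub>R s) \<bullet> s)) (at t)"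
      using line_deriv_scalar grad inU that by blast
    then show ?thesis by (simp add: p1_def inner_commute)
  qed
  have d1: "(p1 has_real_derivative p2 t) (at t)" if "0 \<le> t" "t \<le> 1" for t
    unfolding p1_def p2_def using line_deriv_vec hess inU that by blast
  have dps: "(ps has_real_derivative ps' t) (at t)" if "0 \<le> t" "t \<le> 1" for t
    unfolding ps_def[abs_def] ps'_def
    by (rule derivative_eq_intros d0[OF that] | simp)+
  have dps': "(ps' has_real_derivative ps'' t) (at t)" if "0 \<le> t" "t \<le> 1" for t
    unfolding ps'_def[abs_def] ps''_def
    by (rule derivative_eq_intros d1[OF that] | simp)+
  obtain \<tau> where tau: "0 < \<tau>" "\<tau> < 1" "ps 1 - ps 0 = (1 - 0) * ps' \<tau>"
    using MVT2[of 0 1 ps ps'] dps by auto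
  obtain \<tau>' where tau': "0 < \<tau>'" "\<tau>' < \<tau>" "ps' \<tau> - ps' 0 = (\<tau> - 0) * ps'' \<tau>'"
    using MVT2[of 0 \<tau> ps' ps''] dps' tau by auto
  have "p2 \<tau>' - p2 0 \<le> LH * norm (x + \<tau>' *\<^sub>R s - x) * norm s * norm s"
    using H_lip_inner[OF inU x0, of \<tau>' s s] tau tau' unfolding p2_def by simp
  also have "\<dots> = 6 * c * \<tau>'" using tau' by (simp add: c_def power3_eq_cube)
  finally have "ps'' \<tau>' \<le> 0" by (simp add: ps''_def)
  then have "ps' \<tau> \<le> 0" using tau tau' by (simp add: ps'_def mult_nonneg_nonpos)
  then have "ps 1 \<le> 0" using tau by (simp add: ps_def)
  then show ?thesis by (simp add: ps_def p1_def p2_def c_def inner_commute)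
qed

lemma taylor_g:
  assumes seg: "closed_segment x (x + s) \<subseteq> U"
  shows "norm (g (x + s) - g x - H x *v s) \<le> LH * (norm s)\<^sup>2"
proof -
  have inU: "\<And>t. 0 \<le> t \<Longrightarrow> t \<le> 1 \<Longrightarrow> x + t *\<^sub>R s \<in> U" using seg seg_pt by blast
  have x0: "x \<in> U" using inU[of 0] by simp
  define e where "e = g (x + s) - g x - H x *v s"
  define ch where "ch t = e \<bullet> g (x + t *\<^sub>R s) - t * (e \<bullet> (H x *v s))" for t
  define ch' where "ch' t = e \<bullet> (H (x + t *\<^sub>R s) *v s) - e \<bullet> (H x *v s)" for t
  have d: "(ch has_real_derivative ch' t) (at t)" if "0 \<le> t" "t \<le> 1" for t
  proof -
    have "((\<lambda>t. e \<bullet> g (x + t *\<^sub>R s)) has_real_derivative (e \<bullet> (H (x + t *\<^sub>R s) *v s))) (at t)"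
      using line_deriv_vec hess inU that by blast
    moreover have "((\<lambda>t. t * (e \<bullet> (H x *v s))) has_real_derivative (e \<bullet> (H x *v s))) (at t)"
      using DERIV_cmult_right[OF DERIV_ident] by simp
    ultimately show ?thesis unfolding ch_def[abs_def] ch'_def by (rule DERIV_diff)
  qed
  obtain \<tau> where tau: "0 < \<tau>" "\<tau> < 1" "ch 1 - ch 0 = (1 - 0) * ch' \<tau>"
    using MVT2[of 0 1 ch ch'] d by auto
  have "ch 1 - ch 0 = e \<bullet> e" by (simp add: ch_def e_def inner_diff_right)
  moreover have "ch' \<tau> \<le> LH * norm (x + \<tau> *\<^sub>R s - x) * norm e * norm s"
    using H_lip_inner[OF inU x0, of \<tau> e s] tau unfolding ch'_def by simp
  moreover have "LH * norm (x + \<tau> *\<^sub>R s - x) * norm e * norm s \<le> LH * norm s * norm e * norm s"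
  proof -
    have "\<tau> * (norm s * norm e * norm s) \<le> norm s * norm e * norm s"
      using tau by (intro mult_left_le_one_le) auto
    then have "LH * (\<tau> * (norm s * norm e * norm s)) \<le> LH * (norm s * norm e * norm s)"
      using LH_pos by (simp add: mult_left_mono)
    then show ?thesis using tau by (simp add: algebra_simps)
  qed
  moreover have "e \<bullet> e = (norm e)\<^sup>2" by (simp add: power2_norm_eq_inner)
  moreover have "ch 1 - ch 0 = ch' \<tau>" using tau(3) by simp
  ultimately have "(norm e)\<^sup>2 \<le> LH * norm s * norm e * norm s" by linarith
  then have "norm e * norm e \<le> norm e * (LH * (norm s)\<^sup>2)" by (simp add: power2_eq_square algebra_simps)
  then have "norm e \<le> LH * (norm s)\<^sup>2"
    using LH_pos by (cases "norm e = 0") (simp_all add: less_le)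
  then show ?thesis by (simp add: e_def)
qed

lemma delta2:
  assumes b: "ball x r \<subseteq> U" and uv: "norm u + norm v < r"
  shows "\<exists>z\<in>U. norm (z - x) \<le> norm u + norm v \<and>
     f (x + u + v) - f (x + v) - f (x + u) + f x = v \<bullet> (H z *v u)"
proof -
  have inb: "\<And>w. norm w \<le> norm u + norm v \<Longrightarrow> x + w \<in> U"
    using b uv by (auto simp: dist_norm subset_iff)
  have nuv: "\<And>a b. 0 \<le> a \<Longrightarrow> a \<le> 1 \<Longrightarrow> 0 \<le> b \<Longrightarrow> b \<le> 1 \<Longrightarrow> norm (a *\<^sub>R u + b *\<^sub>R v) \<le> norm u + norm v"
  proof -
    fix a b :: real assume ab: "0 \<le> a" "a \<le> 1" "0 \<le> b" "b \<le> 1"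
    have "norm (a *\<^sub>R u + b *\<^sub>R v) \<le> a * norm u + b * norm v"
      using norm_triangle_ineq[of "a *\<^sub>R u" "b *\<^sub>R v"] ab by simp
    also have "\<dots> \<le> norm u + norm v" using ab
      by (intro add_mono) (simp_all add: mult_left_le_one_le)
    finally show "norm (a *\<^sub>R u + b *\<^sub>R v) \<le> norm u + norm v" .
  qed
  define F where "F a = f (x + u + a *\<^sub>R v) - f (x + a *\<^sub>R v)" for a
  define F' where "F' a = g (x + u + a *\<^sub>R v) \<bullet> v - g (x + a *\<^sub>R v) \<bullet> v" for a
  have dF: "(F has_real_derivative F' a) (at a)" if "0 \<le> a" "a \<le> 1" for a
  proof -
    have p1: "x + u + a *\<^sub>R v \<in> U" using inb[of "u + a *\<^sub>R v"] nuv[of 1 a] that by (simp add: add.assoc)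
    have p2: "x + a *\<^sub>R v \<in> U" using inb[of "a *\<^sub>R v"] nuv[of 0 a] that by simp
    show ?thesis unfolding F_def[abs_def] F'_def
      by (rule DERIV_diff; rule line_deriv_scalar; simp add: grad p1 p2)
  qed
  obtain \<tau> where tau: "0 < \<tau>" "\<tau> < 1" "F 1 - F 0 = (1 - 0) * F' \<tau>"
    using MVT2[of 0 1 F F'] dF by auto
  define G where "G b = v \<bullet> g (x + \<tau> *\<^sub>R v + b *\<^sub>R u)" for b
  define G' where "G' b = v \<bullet> (H (x + \<tau> *\<^sub>R v + b *\<^sub>R u) *v u)" for b
  have dG: "(G has_real_derivative G' b) (at b)" if "0 \<le> b" "b \<le> 1" for b
  proof -
    have "x + \<tau> *\<^sub>R v + b *\<^sub>R u \<in> U" using inb[of "b *\<^sub>R u + \<tau> *\<^sub>R v"] nuv[of b \<tau>] that tau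
      by (simp add: algebra_simps)
    then show ?thesis unfolding G_def[abs_def] G'_def by (intro line_deriv_vec hess)
  qed
  obtain \<sigma> where sig: "0 < \<sigma>" "\<sigma> < 1" "G 1 - G 0 = (1 - 0) * G' \<sigma>"
    using MVT2[of 0 1 G G'] dG by auto
  define z where "z = x + \<tau> *\<^sub>R v + \<sigma> *\<^sub>R u"
  have zn: "norm (z - x) \<le> norm u + norm v" using nuv[of \<sigma> \<tau>] tau sig by (simp add: z_def algebra_simps)
  have zU: "z \<in> U" using inb[of "z - x"] zn by simp
  have "F 1 - F 0 = f (x + u + v) - f (x + v) - f (x + u) + f x" by (simp add: F_def)
  moreover have "F' \<tau> = G 1 - G 0"
    by (simp add: F'_def G_def inner_commute algebra_simps)
  moreover have "G 1 - G 0 = v \<bullet> (H z *v u)" using sig by (simp add: G'_def z_def)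
  ultimately show ?thesis using tau zn zU by auto
qed

lemma H_sym:
  assumes xU: "x \<in> U"
  shows "v \<bullet> (H x *v u) = u \<bullet> (H x *v v)"
proof -
  obtain r where r: "r > 0" "ball x r \<subseteq> U" using U_open xU by (meson openE)
  define D where "D = v \<bullet> (H x *v u) - u \<bullet> (H x *v v)"
  define N where "N = norm u + norm v"
  define K where "K = 2 * LH * N * norm u * norm v"
  have K0: "K \<ge> 0" using LH_pos by (simp add: K_def N_def)
  have bnd: "\<bar>D\<bar> \<le> K * t" if t: "0 < t" "t * N < r" for t
  proof -
    have tn: "norm (t *\<^sub>R u) + norm (t *\<^sub>R v) = t * N" using t by (simp add: N_def algebra_simps)
    obtain z1 where z1: "z1 \<in> U" "norm (z1 - x) \<le> t * N"
      "f (x + t *\<^sub>R u + t *\<^sub>R v) - f (x + t *\<^sub>R v) - f (x + t *\<^sub>R u) + f x = (t *\<^sub>R v) \<bullet> (H z1 *v (t *\<^sub>R u))"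
      using delta2[OF r(2), of "t *\<^sub>R u" "t *\<^sub>R v"] tn t by auto
    obtain z2 where z2: "z2 \<in> U" "norm (z2 - x) \<le> t * N"
      "f (x + t *\<^sub>R v + t *\<^sub>R u) - f (x + t *\<^sub>R u) - f (x + t *\<^sub>R v) + f x = (t *\<^sub>R u) \<bullet> (H z2 *v (t *\<^sub>R v))"
      using delta2[OF r(2), of "t *\<^sub>R v" "t *\<^sub>R u"] tn t by (auto simp: add.commute)
    have eq: "t\<^sup>2 * (v \<bullet> (H z1 *v u)) = t\<^sup>2 * (u \<bullet> (H z2 *v v))"
      using z1(3) z2(3) by (simp add: matrix_vector_mult_scaleR power2_eq_square algebra_simps)
    have e1: "\<bar>v \<bullet> (H x *v u) - v \<bullet> (H z1 *v u)\<bar> \<le> LH * (t * N) * norm v * norm u"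
    proof -
      have "\<bar>v \<bullet> (H x *v u) - v \<bullet> (H z1 *v u)\<bar> \<le> LH * norm (x - z1) * norm v * norm u"
        by (rule H_lip_inner[OF xU z1(1)])
      also have "\<dots> \<le> LH * (t * N) * norm v * norm u"
        using z1(2) LH_pos by (simp add: norm_minus_commute mult_right_mono mult_left_mono)
      finally show ?thesis .
    qed
    have e2: "\<bar>u \<bullet> (H z2 *v v) - u \<bullet> (H x *v v)\<bar> \<le> LH * (t * N) * norm u * norm v"
    proof -
      have "\<bar>u \<bullet> (H z2 *v v) - u \<bullet> (H x *v v)\<bar> \<le> LH * norm (z2 - x) * norm u * norm v"
        by (rule H_lip_inner[OF z2(1) xU])
      also have "\<dots> \<le> LH * (t * N) * norm u * norm v"
        using z2(2) LH_pos by (simp add: mult_right_mono mult_left_mono)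
      finally show ?thesis .
    qed
    have "v \<bullet> (H z1 *v u) = u \<bullet> (H z2 *v v)" using eq t by simp
    then have "\<bar>D\<bar> \<le> \<bar>v \<bullet> (H x *v u) - v \<bullet> (H z1 *v u)\<bar> + \<bar>u \<bullet> (H z2 *v v) - u \<bullet> (H x *v v)\<bar>"
      unfolding D_def by linarith
    also have "\<dots> \<le> K * t" using e1 e2 by (simp add: K_def algebra_simps)
    finally show ?thesis .
  qed
  have "\<bar>D\<bar> \<le> 0"
  proof (rule field_le_epsilon)
    fix e :: real assume e: "e > 0"
    define t where "t = min (r / (2 * (N + 1))) (e / (K + 1))"
    have N0: "N \<ge> 0" by (simp add: N_def)
    have t0: "t > 0" using r e K0 N0 by (simp add: t_def)
    have "t \<le> r / (2 * (N + 1))" by (simp add: t_def)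
    then have "t * N \<le> r / (2 * (N + 1)) * N" using N0 by (rule mult_right_mono)
    also have "\<dots> < r"
    proof -
      have "0 \<le> N * r" using r N0 by simp
      then have "0 < N * r + r * 2" using r by linarith
      then show ?thesis using r N0 by (simp add: field_simps)
    qed
    finally have tN: "t * N < r" .
    have "t \<le> e / (K + 1)" by (simp add: t_def)
    then have "K * t \<le> K * (e / (K + 1))" using K0 by (rule mult_left_mono)
    also have "\<dots> \<le> e" using K0 e by (simp add: field_simps)
    finally show "\<bar>D\<bar> \<le> 0 + e" using bnd[OF t0 tN] by simp
  qed
  then show ?thesis by (simp add: D_def)
qed
end

lemma matc: "mat c *v v = c *\<^sub>R v"
  for v :: "real^'n"
proof -
  have "\<And>i. (\<Sum>j\<in>UNIV. (if i = j then c else 0) * v $ j) = c * v $ i"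
    by (simp add: if_distrib[of "\<lambda>a. a * _"] cong: if_cong)
  then show ?thesis by (simp add: vec_eq_iff matrix_vector_mult_def mat_def if_distrib[of "\<lambda>a. a * _"])
qed

lemma mat_vec: "(Hm + mat c) *v v = Hm *v v + c *\<^sub>R v"
  for v :: "real^'n"
  by (simp add: matrix_vector_mult_add_rdistrib matc)

lemma inner_mat: "u \<bullet> ((Hm + mat c) *v v) = u \<bullet> (Hm *v v) + c * (u \<bullet> v)"
  for u v :: "real^'n"
  by (simp add: mat_vec inner_add_right)

lemma intres_arith:
  fixes e eg a L C m :: real
  assumes e: "e > 0" and eg: "eg > 0" and a: "a \<ge> 0" and L: "L > 0" and C: "C \<ge> 7 + 2 * L"
    and m1: "m \<ge> e / eg\<^sup>2" and m2: "m \<ge> 1 / e ^ 3" and g: "eg < 5/2 * e * a + L * a\<^sup>2"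
  shows "e * a\<^sup>2 * (8 * C * m) \<ge> 1"
proof (rule ccontr)
  assume "\<not> ?thesis"
  then have W: "e * a\<^sup>2 * (8 * C * m) < 1" by simp
  have m0: "m > 0" using m2 e by (smt (verit) zero_less_divide_1_iff zero_less_power)
  have P0: "e * a\<^sup>2 \<ge> 0" using e by simp
  have "e * a\<^sup>2 * (8 * 7 * (e / eg\<^sup>2)) \<le> e * a\<^sup>2 * (8 * C * m)"
  proof (intro mult_left_mono P0)
    have "7 * (e / eg\<^sup>2) \<le> C * m" using C m1 L e eg by (intro mult_mono) auto
    then show "8 * 7 * (e / eg\<^sup>2) \<le> 8 * C * m" by simp
  qed
  then have "56 * e\<^sup>2 * a\<^sup>2 / eg\<^sup>2 < 1" using W by (simp add: power2_eq_square field_simps)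
  then have h1: "56 * (e * a)\<^sup>2 < eg\<^sup>2" using eg by (simp add: power2_eq_square field_simps)
  have "(5 * (e * a))\<^sup>2 = 25 * (e * a)\<^sup>2" by (simp add: power2_eq_square)
  moreover have "(e * a)\<^sup>2 \<ge> 0" by simp
  ultimately have "(5 * (e * a))\<^sup>2 < eg\<^sup>2" using h1 by linarith
  then have "5 * (e * a) < eg" using eg by (smt (verit) power2_less_imp_less)
  then have h2: "L * a\<^sup>2 > eg / 2" using g by simp
  have "e * a\<^sup>2 * (8 * (2 * L) * m) \<le> e * a\<^sup>2 * (8 * C * m)"
    using P0 C m0 L by (intro mult_left_mono) auto
  then have "16 * e * m * (L * a\<^sup>2) < 1" using W by (simp add: algebra_simps)
  moreover have "16 * e * m * (eg / 2) < 16 * e * m * (L * a\<^sup>2)" using h2 e m0 by simp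
  moreover have "16 * e * m * (eg / 2) = 8 * e * eg * m" by simp
  ultimately have h3: "8 * e * eg * m < 1" by linarith
  have "8 * e * eg * (e / eg\<^sup>2) \<le> 8 * e * eg * m" using m1 e eg by (intro mult_left_mono) auto
  moreover have "8 * e * eg * (e / eg\<^sup>2) = 8 * e\<^sup>2 / eg" using eg by (simp add: power2_eq_square field_simps)
  ultimately have "8 * e\<^sup>2 / eg < 1" using h3 by linarith
  then have h4: "8 * e\<^sup>2 < eg" using eg by (simp add: pos_divide_less_eq)
  have "8 * e * eg * (1 / e ^ 3) \<le> 8 * e * eg * m" using m2 e eg by (intro mult_left_mono) auto
  moreover have "8 * e * eg * (1 / e ^ 3) = 8 * eg / e\<^sup>2" using e by (simp add: power2_eq_square power3_eq_cube field_simps)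
  ultimately have "8 * eg / e\<^sup>2 < 1" using h3 by linarith
  then have h5: "8 * eg < e\<^sup>2" using e by (simp add: pos_divide_less_eq)
  show False using h4 h5 e by (smt (verit) zero_less_power)
qed

lemma big_arith:
  fixes e d0 c1 C m :: real
  assumes e: "e > 0" and d0: "d0 > 0" and c1: "c1 > 0" and C1: "C \<ge> 1 / d0\<^sup>2" and C2: "C \<ge> 1 / c1\<^sup>2"
    and m1: "m \<ge> 1 / e" and m2: "m \<ge> 1 / e ^ 3"
  shows "e * (min d0 (c1 * e))\<^sup>2 * (C * m) \<ge> 1"
proof (cases "d0 \<le> c1 * e")
  case True
  have a: "C * d0\<^sup>2 \<ge> 1" using C1 d0 by (simp add: field_simps)
  have b: "m * e \<ge> 1" using m1 e by (simp add: field_simps)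
  have "1 * 1 \<le> (C * d0\<^sup>2) * (m * e)" using a b by (intro mult_mono) auto
  then show ?thesis using True by (simp add: algebra_simps)
next
  case False
  have a: "C * c1\<^sup>2 \<ge> 1" using C2 c1 by (simp add: field_simps)
  have b: "m * e ^ 3 \<ge> 1" using m2 e by (simp add: field_simps)
  have "1 * 1 \<le> (C * c1\<^sup>2) * (m * e ^ 3)" using a b by (intro mult_mono) auto
  then show ?thesis using False by (simp add: power2_eq_square power3_eq_cube algebra_simps)
qed

locale alg4 = smooth f g H U LH
  for f :: "real^'n \<Rightarrow> real" and g H U LH +
  fixes x s :: "nat \<Rightarrow> real^'n" and \<delta> :: "nat \<Rightarrow> real" and mo :: "nat \<Rightarrow> (real^'n) option"
    and epsg epsH \<gamma>1 \<gamma>2 \<psi> \<delta>0 \<delta>max \<eta> zeta M flow :: real and capCG :: bool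
  assumes params: "epsg > 0" "epsH > 0" "0 < \<gamma>1" "\<gamma>1 < 1" "\<gamma>2 \<ge> 1"
      "\<delta>0 > 0" "\<delta>max \<ge> \<delta>0" "0 < \<eta>" "\<eta> < 1" "0 < zeta" "zeta < 1"
    and init: "\<delta> 0 = \<delta>0"
    and run: "alg4_run f g H epsg epsH \<gamma>1 \<gamma>2 \<psi> \<delta>max \<eta> zeta capCG M x \<delta> s mo"
    and segs: "\<And>k. k \<in> alg4_K g H epsg epsH zeta capCG M x \<delta> mo \<Longrightarrow>
                 closed_segment (x k) (x k + s k) \<subseteq> U"
    and bdd: "\<And>k. (\<forall>j<k. \<not> alg4_terminates g H epsg epsH zeta capCG M x \<delta> mo j) \<Longrightarrow> f (x k) \<ge> flow"
begin

abbreviation "trm j \<equiv> alg4_terminates g H epsg epsH zeta capCG M x \<delta> mo j"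
abbreviation "Ks \<equiv> alg4_K g H epsg epsH zeta capCG M x \<delta> mo"
abbreviation "calls k \<equiv> alg4_calls_meo g H epsg epsH zeta capCG M x \<delta> k"
abbreviation "Ss \<equiv> alg4_S f g H epsg epsH \<eta> zeta capCG M x \<delta> s mo"
abbreviation "md k \<equiv> model_decrease (g (x k)) (H (x k)) (s k)"
abbreviation "rho k \<equiv> alg4_rho f g H x s k"
abbreviation "cgk k \<equiv> alg4_cg g H epsH zeta capCG M x \<delta> k"
definition "intres k = (\<not> calls k \<and> snd (cgk k) = INT_RES)"

lemma Ks_iff: "k \<in> Ks \<longleftrightarrow> (\<forall>j\<le>k. \<not> trm j)" by (simp add: alg4_K_def)

lemma xU: "k \<in> Ks \<Longrightarrow> x k \<in> U" using segs[of k] ends_in_segment(1) by blast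

lemma run_step: "k \<in> Ks \<Longrightarrow>
        s k = (if calls k then the (mo k) else fst (cgk k)) \<and>
        (if rho k \<ge> \<eta> then
           x (Suc k) = x k + s k \<and>
           \<delta> (Suc k) = (if norm (s k) \<ge> \<psi> * \<delta> k then min (\<gamma>2 * \<delta> k) \<delta>max else \<delta> k)
         else x (Suc k) = x k \<and> \<delta> (Suc k) = \<gamma>1 * norm (s k))"
  using run unfolding alg4_run_def by blast

lemma run_meo: "k \<in> Ks \<Longrightarrow> calls k \<Longrightarrow> meo_spec (g (x k)) (H (x k)) epsH (\<delta> k) (mo k)"
  using run unfolding alg4_run_def alg4_K_def by auto

lemma md_q: "md k = epsH * (norm (s k))\<^sup>2 -
   (g (x k) \<bullet> s k + 1/2 * (s k \<bullet> ((H (x k) + mat (2 * epsH)) *v s k)))"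
  by (simp only: model_decrease_def inner_mat power2_norm_eq_inner) (simp add: algebra_simps)

lemma step_type:
  assumes k: "k \<in> Ks" and dpos: "\<delta> k > 0"
  shows "md k > 0 \<and> md k \<ge> epsH / 4 * (norm (s k))\<^sup>2 \<and>
    (if intres k then norm (g (x k)) > epsg \<and> md k \<ge> epsH * (norm (s k))\<^sup>2 \<and>
        norm (g (x k) + H (x k) *v s k + (2 * epsH) *\<^sub>R s k) \<le> epsH / 2 * norm (s k)
     else norm (s k) = \<delta> k)"
proof (cases "calls k")
  case True
  have nt: "\<not> trm k" using k Ks_iff by auto
  then obtain sm where mo: "mo k = Some sm" using True by (cases "mo k") (auto simp: alg4_terminates_def)
  have sk: "s k = sm" using run_step[OF k] True mo by simp
  have ms: "meo_spec (g (x k)) (H (x k)) epsH (\<delta> k) (Some sm)" using run_meo[OF k True] mo by simp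
  have v: "g (x k) \<bullet> sm \<le> 0" "sm \<bullet> (H (x k) *v sm) \<le> - (1/2) * epsH * (norm sm)\<^sup>2"
      "norm sm = \<delta> k"
    using ms unfolding meo_spec_def option.case by blast+
  have "md k \<ge> epsH / 4 * (norm (s k))\<^sup>2"
    using v sk by (simp add: model_decrease_def)
  moreover have "epsH / 4 * (norm (s k))\<^sup>2 > 0" using params dpos v sk by simp
  ultimately show ?thesis using True v sk by (simp add: intres_def)
next
  case False
  then have out: "snd (cgk k) \<in> {BND_NEG, BND_NORM} \<or> (norm (g (x k)) > epsg \<and> snd (cgk k) = INT_RES)"
    by (simp add: alg4_calls_meo_def Let_def)
  have sk: "s k = fst (cgk k)" using run_step[OF k] False by simp
  have gnz: "g (x k) \<noteq> 0"
  proof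
    assume "g (x k) = 0"
    then show False using out params by (simp add: alg4_cg_def)
  qed
  define A where "A = H (x k) + mat (2 * epsH)"
  define gk where "gk = g (x k)"
  define kmax where "kmax = tcg_kmax CARD('n) epsH zeta capCG M"
  have cgk_eq: "cgk k = tcg_loop CARD('n) 0 (H (x k)) gk epsH (\<delta> k) zeta kmax (cY A gk 0) (cR A gk 0) (cP A gk 0)"
    using gnz by (simp add: alg4_cg_def tcg_def cgs_0 gk_def kmax_def)
  obtain i where i: "\<forall>l. 0 \<le> l \<and> l < i \<longrightarrow> ccont A gk epsH (\<delta> k) zeta l"
     "cspec A gk epsH (\<delta> k) zeta i (cgk k)"
    using tcg_loop_char[OF A_def, of 0 gk "\<delta> k" zeta "CARD('n)" kmax] cgk_eq by auto
  have symA: "\<And>u v. (A *v u) \<bullet> v = u \<bullet> (A *v v)"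
  proof -
    fix u v :: "real^'n"
    have "v \<bullet> (H (x k) *v u) = u \<bullet> (H (x k) *v v)" using H_sym[OF xU[OF k]] .
    then show "(A *v u) \<bullet> v = u \<bullet> (A *v v)"
    proof -
      have "(A *v u) \<bullet> v = (H (x k) *v u) \<bullet> v + 2 * epsH * (u \<bullet> v)"
        by (simp add: A_def mat_vec inner_add_left)
      also have "(H (x k) *v u) \<bullet> v = v \<bullet> (H (x k) *v u)" by (rule inner_commute)
      finally show ?thesis using \<open>v \<bullet> (H (x k) *v u) = u \<bullet> (H (x k) *v v)\<close>
        by (simp add: A_def mat_vec inner_add_right)
    qed
  qed
  interpret C: cgloc A gk epsH "\<delta> k" zeta i
    using symA gnz params i(1) by unfold_locales (auto simp: gk_def)
  have mdq: "md k = epsH * (norm (s k))\<^sup>2 - C.qA (s k)"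
    by (simp add: md_q qAf_def A_def gk_def)
  have e0: "epsH > 0" using params by simp
  show ?thesis
  proof (cases "snd (cgk k)")
    case BND_NEG
    then have "s k = bnd_step (\<delta> k) (cY A gk i) (cP A gk i)" "cP A gk i \<bullet> (A *v cP A gk i) \<le> epsH * (norm (cP A gk i))\<^sup>2"
      using i(2) sk by (auto simp: cspec_def)
    then have q: "C.qA (s k) \<le> epsH * (\<delta> k)\<^sup>2 / 2" "norm (s k) = \<delta> k" using C.bnd_neg_q dpos by auto
    then have "md k \<ge> epsH * (\<delta> k)\<^sup>2 / 2" using mdq by simp
    moreover have "epsH * (\<delta> k)\<^sup>2 > 0" using e0 dpos by simp
    ultimately show ?thesis using q BND_NEG False by (simp add: intres_def)
  next
    case BND_NORM
    then have "s k = bnd_step (\<delta> k) (cY A gk i) (cP A gk i)" "cP A gk i \<bullet> (A *v cP A gk i) > epsH * (norm (cP A gk i))\<^sup>2"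
       "norm (cY A gk (Suc i)) \<ge> \<delta> k"
      using i(2) sk by (auto simp: cspec_def)
    then have q: "C.qA (s k) \<le> 0" "norm (s k) = \<delta> k" using C.bnd_norm_q dpos by auto
    then have "md k \<ge> epsH * (\<delta> k)\<^sup>2" using mdq by simp
    moreover have "epsH * (\<delta> k)\<^sup>2 > 0" using e0 dpos by simp
    ultimately show ?thesis using q BND_NORM False by (simp add: intres_def)
  next
    case INT_RES
    then have ii: "s k = cY A gk (Suc i)" "cP A gk i \<bullet> (A *v cP A gk i) > epsH * (norm (cP A gk i))\<^sup>2"
        "norm (cR A gk (Suc i)) \<le> zeta / 2 * min (norm gk) (epsH * norm (cY A gk (Suc i)))"
      using i(2) sk by (auto simp: cspec_def)
    have "epsH * (norm (cP A gk i))\<^sup>2 \<ge> 0" using e0 by simp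
    then have "cP A gk i \<bullet> (A *v cP A gk i) > 0" using ii(2) by linarith
    then have q: "C.qA (s k) < 0" using C.q_Suc_lt ii(1) by simp
    then have mdk: "md k > epsH * (norm (s k))\<^sup>2" using mdq by simp
    have r: "cR A gk (Suc i) = g (x k) + H (x k) *v s k + (2 * epsH) *\<^sub>R s k"
      using cg_resid[of A gk "Suc i"] ii(1) by (simp add: A_def mat_vec matc gk_def algebra_simps)
    have "zeta / 2 * min (norm gk) (epsH * norm (cY A gk (Suc i))) \<le> zeta / 2 * (epsH * norm (s k))"
      using params ii(1) by (intro mult_left_mono) auto
    also have "\<dots> \<le> epsH / 2 * norm (s k)"
    proof -
      have "zeta * norm (s k) \<le> 1 * norm (s k)" using params by (intro mult_right_mono) auto
      then have "epsH * (zeta * norm (s k)) \<le> epsH * norm (s k)" using params by (simp add: mult_left_mono)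
      then show ?thesis by (simp add: algebra_simps)
    qed
    finally have res: "norm (g (x k) + H (x k) *v s k + (2 * epsH) *\<^sub>R s k) \<le> epsH / 2 * norm (s k)"
      using ii(3) r by simp
    have "epsH * (norm (s k))\<^sup>2 \<ge> 0" using e0 by simp
    moreover have "epsH / 4 * (norm (s k))\<^sup>2 \<le> epsH * (norm (s k))\<^sup>2" using e0 by simp
    ultimately show ?thesis using mdk res INT_RES False out by (auto simp: intres_def)
  next
    case INT_MAX
    then show ?thesis using out by simp
  qed
qed


lemma f_decr: "k \<in> Ks \<Longrightarrow> f (x k) - f (x k + s k) \<ge> md k - LH / 6 * norm (s k) ^ 3"
  using taylor_f[OF segs, of k] by (simp add: model_decrease_def)

lemma unsucc:
  assumes k: "k \<in> Ks" and dpos: "\<delta> k > 0" and r: "\<not> rho k \<ge> \<eta>"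
  shows "norm (s k) > 3 * (1 - \<eta>) * epsH / (2 * LH)"
proof (rule ccontr)
  assume "\<not> ?thesis"
  then have a: "norm (s k) \<le> 3 * (1 - \<eta>) * epsH / (2 * LH)" by simp
  have st: "md k > 0" "md k \<ge> epsH / 4 * (norm (s k))\<^sup>2" using step_type[OF k dpos] by auto
  have "LH * norm (s k) \<le> 3 * (1 - \<eta>) * epsH / 2" using a LH_pos by (simp add: field_simps)
  then have "(LH * norm (s k)) * (norm (s k))\<^sup>2 \<le> (3 * (1 - \<eta>) * epsH / 2) * (norm (s k))\<^sup>2"
    by (rule mult_right_mono) simp
  then have "LH / 6 * norm (s k) ^ 3 \<le> (1 - \<eta>) * (epsH / 4 * (norm (s k))\<^sup>2)"
    by (simp add: power2_eq_square power3_eq_cube algebra_simps)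
  also have "\<dots> \<le> (1 - \<eta>) * md k" using st params by (intro mult_left_mono) auto
  finally have "f (x k) - f (x k + s k) \<ge> \<eta> * md k" using f_decr[OF k] by (simp add: algebra_simps)
  then have "rho k \<ge> \<eta>" using st by (simp add: alg4_rho_def pos_le_divide_eq)
  then show False using r by simp
qed

lemma succ:
  assumes k: "k \<in> Ks" and dpos: "\<delta> k > 0" and r: "rho k \<ge> \<eta>"
  shows "f (x k) - f (x (Suc k)) \<ge> \<eta> * md k" and "x (Suc k) = x k + s k"
proof -
  show xs: "x (Suc k) = x k + s k" using run_step[OF k] r by simp
  have "md k > 0" using step_type[OF k dpos] by auto
  then show "f (x k) - f (x (Suc k)) \<ge> \<eta> * md k" using r xs by (simp add: alg4_rho_def pos_le_divide_eq)
qed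

definition "dmin = min \<delta>0 (\<gamma>1 * (3 * (1 - \<eta>) * epsH / (2 * LH)))"

lemma dmin_pos: "dmin > 0" using params LH_pos by (simp add: dmin_def)

lemma Ks_down: "Suc k \<in> Ks \<Longrightarrow> k \<in> Ks" by (simp add: Ks_iff)

lemma delta_lb: "k \<in> Ks \<Longrightarrow> \<delta> k \<ge> dmin"
proof (induction k)
  case 0 then show ?case by (simp add: init dmin_def)
next
  case (Suc k)
  then have k: "k \<in> Ks" using Ks_down by blast
  then have dk: "\<delta> k \<ge> dmin" using Suc by simp
  then have dpos: "\<delta> k > 0" using dmin_pos by linarith
  show ?case
  proof (cases "rho k \<ge> \<eta>")
    case True
    have "min (\<gamma>2 * \<delta> k) \<delta>max \<ge> dmin"
    proof -
      have "\<gamma>2 * \<delta> k \<ge> \<delta> k" using params dpos by simp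
      moreover have "\<delta>max \<ge> dmin" using params by (simp add: dmin_def)
      ultimately show ?thesis using dk by simp
    qed
    then show ?thesis using run_step[OF k] True dk by (auto split: if_splits)
  next
    case False
    have "norm (s k) > 3 * (1 - \<eta>) * epsH / (2 * LH)" using unsucc[OF k dpos False] .
    then have "\<gamma>1 * norm (s k) \<ge> \<gamma>1 * (3 * (1 - \<eta>) * epsH / (2 * LH))" using params
      by (intro mult_left_mono) auto
    moreover have "\<gamma>1 * (3 * (1 - \<eta>) * epsH / (2 * LH)) \<ge> dmin" by (simp add: dmin_def)
    ultimately show ?thesis using run_step[OF k] False by simp
  qed
qed

definition "Cc = max (1 / \<delta>0\<^sup>2) (max (4 * LH\<^sup>2 / (9 * \<gamma>1\<^sup>2 * (1 - \<eta>)\<^sup>2)) (7 + 2 * LH))"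
definition "mm = max (1 / epsH) (max (epsH / epsg\<^sup>2) (1 / epsH ^ 3))"
definition "T = \<eta> / (8 * Cc * mm)"

lemma Cc_ge: "Cc \<ge> 7 + 2 * LH" by (simp add: Cc_def)
lemma Cc_pos: "Cc > 0" using LH_pos Cc_ge by linarith
lemma mm_pos: "mm > 0" using params by (simp add: mm_def max_def)
lemma T_pos: "T > 0" using Cc_pos mm_pos params by (simp add: T_def)

lemma big:
  assumes k: "k \<in> Ks" and r: "rho k \<ge> \<eta>" and ni: "\<not> intres k"
  shows "f (x k) - f (x (Suc k)) \<ge> 2 * T"
proof -
  have dk: "\<delta> k \<ge> dmin" using delta_lb[OF k] .
  then have dpos: "\<delta> k > 0" using dmin_pos by linarith
  have st: "md k \<ge> epsH / 4 * (norm (s k))\<^sup>2" "norm (s k) = \<delta> k" using step_type[OF k dpos] ni by auto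
  define c1 where "c1 = \<gamma>1 * 3 * (1 - \<eta>) / (2 * LH)"
  have c1: "c1 > 0" using params LH_pos by (simp add: c1_def)
  have dm: "dmin = min \<delta>0 (c1 * epsH)" unfolding dmin_def c1_def
    by (rule arg_cong[where f="min \<delta>0"]) (simp add: field_simps)
  have "1 / c1\<^sup>2 = 4 * LH\<^sup>2 / (9 * \<gamma>1\<^sup>2 * (1 - \<eta>)\<^sup>2)" by (simp add: c1_def power2_eq_square field_simps)
  then have "epsH * dmin\<^sup>2 * (Cc * mm) \<ge> 1" unfolding dm
    using params by (intro big_arith) (auto simp: Cc_def mm_def c1)
  then have "1 / (Cc * mm) \<le> epsH * dmin\<^sup>2" using Cc_pos mm_pos by (simp add: field_simps)
  moreover have "dmin\<^sup>2 \<le> (\<delta> k)\<^sup>2" using dk dmin_pos by (simp add: power_mono)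
  moreover have "epsH * dmin\<^sup>2 \<le> epsH * (\<delta> k)\<^sup>2" using calculation(2) params by (intro mult_left_mono) auto
  ultimately have "1 / (Cc * mm) \<le> epsH * (\<delta> k)\<^sup>2" by linarith
  then have "2 * T \<le> \<eta> * (epsH / 4 * (\<delta> k)\<^sup>2)" using params Cc_pos mm_pos
    by (simp add: T_def field_simps)
  also have "\<dots> \<le> \<eta> * md k" using st params by (intro mult_left_mono) auto
  also have "\<dots> \<le> f (x k) - f (x (Suc k))" using succ[OF k dpos r] by simp
  finally show ?thesis .
qed

lemma intres_dec:
  assumes k: "k \<in> Ks" and r: "rho k \<ge> \<eta>" and ir: "intres k"
  shows "f (x k) - f (x (Suc k)) \<ge> 0 \<and> (norm (g (x (Suc k))) > epsg \<longrightarrow> f (x k) - f (x (Suc k)) \<ge> T)"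
proof -
  have dpos: "\<delta> k > 0" using delta_lb[OF k] dmin_pos by linarith
  define a where "a = norm (s k)"
  have st: "md k \<ge> epsH * a\<^sup>2" "norm (g (x k) + H (x k) *v s k + (2 * epsH) *\<^sub>R s k) \<le> epsH / 2 * a"
    using step_type[OF k dpos] ir by (auto simp: a_def)
  have fd: "f (x k) - f (x (Suc k)) \<ge> \<eta> * md k" and xs: "x (Suc k) = x k + s k" using succ[OF k dpos r] by auto
  have ea: "epsH * a\<^sup>2 \<ge> 0" using params by simp
  have fd2: "f (x k) - f (x (Suc k)) \<ge> \<eta> * (epsH * a\<^sup>2)"
  proof -
    have "\<eta> * (epsH * a\<^sup>2) \<le> \<eta> * md k" using st(1) params by (intro mult_left_mono) auto
    then show ?thesis using fd by linarith
  qed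
  have nn: "\<eta> * (epsH * a\<^sup>2) \<ge> 0" using ea params by simp
  have "norm (g (x (Suc k))) > epsg \<longrightarrow> f (x k) - f (x (Suc k)) \<ge> T"
  proof
    assume gl: "norm (g (x (Suc k))) > epsg"
    have tg: "norm (g (x k + s k) - g (x k) - H (x k) *v s k) \<le> LH * a\<^sup>2"
      using taylor_g[OF segs[OF k]] by (simp add: a_def)
    have tri: "norm (u - v + w) \<le> norm u + norm v + norm w" for u v w :: "real^'n"
    proof -
      have "norm (u - v + w) \<le> norm (u - v) + norm w" by (rule norm_triangle_ineq)
      also have "norm (u - v) \<le> norm u + norm v" by (rule norm_triangle_ineq4)
      finally show ?thesis by simp
    qed
    have "g (x k + s k) = (g (x k) + H (x k) *v s k + (2 * epsH) *\<^sub>R s k) - (2 * epsH) *\<^sub>R s k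
        + (g (x k + s k) - g (x k) - H (x k) *v s k)" by simp
    then have "norm (g (x k + s k)) \<le> norm (g (x k) + H (x k) *v s k + (2 * epsH) *\<^sub>R s k)
        + norm ((2 * epsH) *\<^sub>R s k) + norm (g (x k + s k) - g (x k) - H (x k) *v s k)"
      using tri by metis
    also have "\<dots> \<le> epsH / 2 * a + 2 * epsH * a + LH * a\<^sup>2" using st(2) tg params by (simp add: a_def)
    finally have "norm (g (x k + s k)) \<le> 5/2 * epsH * a + LH * a\<^sup>2" by (simp add: algebra_simps)
    then have "epsg < 5/2 * epsH * a + LH * a\<^sup>2" using gl xs by simp
    then have "epsH * a\<^sup>2 * (8 * Cc * mm) \<ge> 1"
      using params LH_pos by (intro intres_arith) (auto simp: a_def Cc_def mm_def)
    then have "1 / (8 * Cc * mm) \<le> epsH * a\<^sup>2" using Cc_pos mm_pos by (simp add: field_simps)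
    then have "\<eta> * (1 / (8 * Cc * mm)) \<le> \<eta> * (epsH * a\<^sup>2)" using params by (intro mult_left_mono) auto
    then have "T \<le> \<eta> * (epsH * a\<^sup>2)" by (simp add: T_def)
    then show "f (x k) - f (x (Suc k)) \<ge> T" using fd2 by simp
  qed
  then show ?thesis using fd2 nn by simp
qed

definition "Phi k = f (x k) - (if norm (g (x k)) \<le> epsg then T else 0)"

lemma phi_step:
  assumes k: "k \<in> Ks"
  shows "Phi k - Phi (Suc k) \<ge> (if rho k \<ge> \<eta> then T else 0)"
proof (cases "rho k \<ge> \<eta>")
  case False
  then have "x (Suc k) = x k" using run_step[OF k] by simp
  then show ?thesis using False by (simp add: Phi_def)
next
  case True
  note Tp = T_pos
  show ?thesis
  proof (cases "intres k")
    case ir: True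
    have dpos: "\<delta> k > 0" using delta_lb[OF k] dmin_pos by linarith
    have gk: "norm (g (x k)) > epsg" using step_type[OF k dpos] ir by auto
    have d: "f (x k) - f (x (Suc k)) \<ge> 0 \<and> (norm (g (x (Suc k))) > epsg \<longrightarrow> f (x k) - f (x (Suc k)) \<ge> T)"
      using intres_dec[OF k True ir] .
    show ?thesis using gk d True by (auto simp: Phi_def)
  next
    case ni: False
    have d: "f (x k) - f (x (Suc k)) \<ge> 2 * T" using big[OF k True ni] .
    have "Phi k \<ge> f (x k) - T" "Phi (Suc k) \<le> f (x (Suc k))" using Tp by (auto simp: Phi_def)
    then show ?thesis using d True by (auto simp: Phi_def split: if_splits)
  qed
qed

lemma S_iff: "k \<in> Ss \<longleftrightarrow> k \<in> Ks \<and> rho k \<ge> \<eta>" by (simp add: alg4_S_def)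

lemma phi_sum: "(\<forall>j<N. \<not> trm j) \<Longrightarrow> Phi 0 - Phi N \<ge> T * card (Ss \<inter> {..<N})"
proof (induction N)
  case 0 then show ?case by simp
next
  case (Suc N)
  then have IH: "Phi 0 - Phi N \<ge> T * card (Ss \<inter> {..<N})" by simp
  have NK: "N \<in> Ks" using Suc.prems by (simp add: Ks_iff)
  have st: "Phi N - Phi (Suc N) \<ge> (if rho N \<ge> \<eta> then T else 0)" using phi_step[OF NK] .
  show ?case
  proof (cases "rho N \<ge> \<eta>")
    case True
    then have "Ss \<inter> {..<Suc N} = insert N (Ss \<inter> {..<N})" using NK by (auto simp: S_iff)
    then have "card (Ss \<inter> {..<Suc N}) = Suc (card (Ss \<inter> {..<N}))" by simp
    then show ?thesis using IH st True by (simp add: algebra_simps)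
  next
    case False
    then have "Ss \<inter> {..<Suc N} = Ss \<inter> {..<N}" using NK by (auto simp: S_iff less_Suc_eq)
    then show ?thesis using IH st False by simp
  qed
qed

definition "XX = 8 * (f (x 0) - flow) / \<eta> * Cc * mm"

lemma card_bound: "(\<forall>j<N. \<not> trm j) \<Longrightarrow> real (card (Ss \<inter> {..<N})) \<le> XX + 1"
proof -
  assume N: "\<forall>j<N. \<not> trm j"
  have "Phi 0 \<le> f (x 0)" using T_pos by (simp add: Phi_def)
  moreover have "Phi N \<ge> f (x N) - T" using T_pos by (simp add: Phi_def)
  moreover have "f (x N) \<ge> flow" using bdd N by simp
  ultimately have "T * card (Ss \<inter> {..<N}) \<le> f (x 0) - flow + T" using phi_sum[OF N] by linarith
  then have "card (Ss \<inter> {..<N}) \<le> (f (x 0) - flow + T) / T" using T_pos by (simp add: field_simps)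
  also have "(f (x 0) - flow + T) / T = XX + 1"
    using T_pos Cc_pos mm_pos params by (simp add: XX_def T_def field_simps)
  finally show ?thesis .
qed

lemma XX_nonneg: "XX \<ge> 0"
proof -
  have "f (x 0) \<ge> flow" using bdd[of 0] by simp
  then show ?thesis using Cc_pos mm_pos params by (simp add: XX_def)
qed

lemma main: "finite Ss \<and> real (card Ss) \<le> of_int \<lfloor>XX\<rfloor> + 1"
proof -
  have S_K: "Ss \<subseteq> Ks" by (auto simp: S_iff)
  have fin_card: "finite Ss \<and> real (card Ss) \<le> XX + 1"
  proof (cases "\<exists>kt. trm kt")
    case True
    define kt where "kt = (LEAST kt. trm kt)"
    have tk: "trm kt" using True LeastI_ex kt_def by metis
    have nb: "\<forall>j<kt. \<not> trm j" using not_less_Least kt_def by blast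
    have "Ss \<subseteq> {..<kt}"
    proof
      fix k assume "k \<in> Ss"
      then have "\<forall>j\<le>k. \<not> trm j" using S_K Ks_iff by blast
      then show "k \<in> {..<kt}" using tk by (metis lessThan_iff not_le)
    qed
    then have "Ss \<inter> {..<kt} = Ss" by blast
    then show ?thesis using card_bound[OF nb] by (metis finite_Int finite_lessThan)
  next
    case False
    then have all: "\<And>N. \<forall>j<N. \<not> trm j" by blast
    have fin: "finite Ss"
    proof (rule ccontr)
      assume inf: "\<not> finite Ss"
      obtain n :: nat where n: "real n > XX + 1" using reals_Archimedean2 by blast
      obtain F where F: "finite F" "card F = n" "F \<subseteq> Ss" using infinite_arbitrarily_large[OF inf] by blast
      define N where "N = Suc (Max (insert 0 F))"
      have "F \<subseteq> Ss \<inter> {..<N}"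
        using F by (auto simp: N_def less_Suc_eq_le)
      then have "card F \<le> card (Ss \<inter> {..<N})" by (intro card_mono) auto
      then have "real n \<le> XX + 1" using card_bound[OF all[of N]] F(2) by linarith
      then show False using n by simp
    qed
    define N where "N = Suc (Max (insert 0 Ss))"
    have "Ss \<inter> {..<N} = Ss" using fin by (auto simp: N_def less_Suc_eq_le)
    then show ?thesis using fin card_bound[OF all[of N]] by simp
  qed
  have "int (card Ss) - 1 \<le> \<lfloor>XX\<rfloor>" using fin_card by (simp add: le_floor_iff)
  then have "real (card Ss) \<le> of_int \<lfloor>XX\<rfloor> + 1" by linarith
  then show ?thesis using fin_card by simp
qed
end

theorem lemma4p4:
  fixes f :: "real^'n \<Rightarrow> real" and g :: "real^'n \<Rightarrow> real^'n" and H :: "real^'n \<Rightarrow> real^'n^'n"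
    and x s :: "nat \<Rightarrow> real^'n" and \<delta> :: "nat \<Rightarrow> real" and mo :: "nat \<Rightarrow> (real^'n) option"
    and epsg epsH \<gamma>1 \<gamma>2 \<psi> \<delta>0 \<delta>max \<eta> zeta \<xi> M Lg LH flow :: real and capCG :: bool
    and U :: "(real^'n) set"
  assumes params: "epsg > 0" "epsH > 0" "0 < \<gamma>1" "\<gamma>1 < 1" "\<gamma>2 \<ge> 1"
      "1 / \<gamma>2 < \<psi>" "\<psi> \<le> 1" "\<delta>0 > 0" "\<delta>max \<ge> \<delta>0" "0 < \<eta>" "\<eta> < 1"
      "0 < zeta" "zeta < 1" "0 \<le> \<xi>" "\<xi> < 1" "M \<ge> Lg"
    and init: "\<delta> 0 = \<delta>0"
    and run: "alg4_run f g H epsg epsH \<gamma>1 \<gamma>2 \<psi> \<delta>max \<eta> zeta capCG M x \<delta> s mo"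
    and U_open: "open U"
    and grad: "\<And>y. y \<in> U \<Longrightarrow> (f has_derivative (\<lambda>h. g y \<bullet> h)) (at y)"
    and hess: "\<And>y. y \<in> U \<Longrightarrow> (g has_derivative (\<lambda>h. H y *v h)) (at y)"
    and hess_cont: "continuous_on U H"
    and Lg_pos: "Lg > 0" and LH_pos: "LH > 0"
    and g_lip: "\<And>y z. y \<in> U \<Longrightarrow> z \<in> U \<Longrightarrow> norm (g y - g z) \<le> Lg * norm (y - z)"
    and H_lip: "\<And>y z. y \<in> U \<Longrightarrow> z \<in> U \<Longrightarrow> onorm (\<lambda>v. (H y - H z) *v v) \<le> LH * norm (y - z)"
    and segs: "\<And>k. k \<in> alg4_K g H epsg epsH zeta capCG M x \<delta> mo \<Longrightarrow>
                 closed_segment (x k) (x k + s k) \<subseteq> U"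
    and bdd: "\<And>k. (\<forall>j<k. \<not> alg4_terminates g H epsg epsH zeta capCG M x \<delta> mo j) \<Longrightarrow> f (x k) \<ge> flow"
  shows "finite (alg4_S f g H epsg epsH \<eta> zeta capCG M x \<delta> s mo) \<and>
         real (card (alg4_S f g H epsg epsH \<eta> zeta capCG M x \<delta> s mo))
           \<le> of_int \<lfloor>(8 * (f (x 0) - flow) / \<eta>
                   * max (1 / \<delta>0\<^sup>2) (max (4 * LH\<^sup>2 / (9 * \<gamma>1\<^sup>2 * (1 - \<eta>)\<^sup>2)) (7 + 2 * LH)))
                  * max (1 / epsH) (max (epsH / epsg\<^sup>2) (1 / epsH ^ 3))\<rfloor> + 1"
  proof -
  interpret A: alg4 f g H U LH x s \<delta> mo epsg epsH \<gamma>1 \<gamma>2 \<psi> \<delta>0 \<delta>max \<eta> zeta M flow capCG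
    using params init run U_open grad hess LH_pos H_lip segs bdd by unfold_locales auto
  show ?thesis using A.main unfolding A.XX_def A.Cc_def A.mm_def by simp
qed

end
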